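(* Let $N\ge 3$, $p\ge 1$, and let $E_N$ be the minimal cost of a Hamiltonian cycle on $N$ points drawn independently and uniformly in $[0,1]$. Then $$\mathbb E[E_N]=\big[(N-2)(p+1)+2\big]\frac{\Gamma(N+1)\,\Gamma(p+1)}{\Gamma(N+p+1)},$$ and consequently $\lim_{N\to\infty}N^{p-1}\,\mathbb E[E_N]=\Gamma(p+2)$.
   Context: For points $x_1,\dots,x_N\in[0,1]$ forming the vertices of the complete graph $\mathcal K_N$, the weight of the edge $\{x_i,x_j\}$ is $|x_i-x_j|^p$ and the cost of a Hamiltonian cycle is the sum of its edge weights; $E_N$ is the minimum of this cost over all Hamiltonian cycles. *)

theory Defs
  imports "HOL-Probability.Probability" "HOL-Combinatorics.Permutations"
begin

definition cycle_cost :: "real \<Rightarrow> nat \<Rightarrow> (nat \<Rightarrow> real) \<Rightarrow> (nat \<Rightarrow> nat) \<Rightarrow> real" where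
  "cycle_cost p N x \<sigma> = (\<Sum>i<N. \<bar>x (\<sigma> i) - x (\<sigma> ((i + 1) mod N))\<bar> powr p)"

definition min_cycle_cost :: "real \<Rightarrow> nat \<Rightarrow> (nat \<Rightarrow> real) \<Rightarrow> real" where
  "min_cycle_cost p N x = Min {cycle_cost p N x \<sigma> | \<sigma>. \<sigma> permutes {..<N}}"

definition unif_points :: "nat \<Rightarrow> (nat \<Rightarrow> real) measure" where
  "unif_points N = PiM {..<N} (\<lambda>_. uniform_measure lborel {0..1::real})"

definition expected_min_cost :: "real \<Rightarrow> nat \<Rightarrow> real" where
  "expected_min_cost p N = (\<integral>x. min_cycle_cost p N x \<partial>unif_points N)"

end

theory Submission
  imports Defs
begin

lemma powr_incdiff:
  fixes u v v' p :: real
  assumes "0 \<le> v'" "v' \<le> v" "0 \<le> u" "p \<ge> 1"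
  shows "(u+v') powr p - v' powr p \<le> (u+v) powr p - v powr p"
proof -
  let ?h = "\<lambda>w. (u+w) powr p - w powr p"
  have "?h v' \<le> ?h v"
  proof (rule DERIV_nonneg_imp_increasing_open[OF assms(2)])
    fix x assume x: "v' < x" "x < v"
    hence xp: "x > 0" "u + x > 0" using assms by auto
    have "DERIV ?h x :> p * (u+x) powr (p-1) * 1 - p * x powr (p-1)"
      by (rule derivative_eq_intros has_real_derivative_powr[THEN DERIV_chain2] | use xp in simp)+
    moreover have "p * x powr (p-1) \<le> p * (u+x) powr (p-1)"
      using xp assms by (intro mult_left_mono powr_mono2) auto
    ultimately show "\<exists>y. DERIV ?h x :> y \<and> y \<ge> 0" by (intro exI[of _ "p * (u+x) powr (p-1) * 1 - p * x powr (p-1)"]) auto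
  next
    show "continuous_on {v'..v} ?h"
      using assms by (intro continuous_intros continuous_on_powr') auto
  qed
  thus ?thesis by simp
qed

lemma powr_superadd:
  fixes a b p :: real
  assumes "0 \<le> a" "0 \<le> b" "p \<ge> 1"
  shows "a powr p + b powr p \<le> (a+b) powr p"
  using powr_incdiff[of 0 b a p] assms by simp

lemma key_ineq:
  fixes p m c d a b :: real
  assumes p: "p \<ge> 1" and mc: "c \<le> m" and cd: "d \<le> c" and ab: "a \<le> b" and bc: "b \<le> m"
    and ad: "a \<le> d" and bcd: "b = c \<or> b \<le> d"
  shows "(m-c) powr p + (m-d) powr p - (c-d) powr p \<le> (m-a) powr p + (m-b) powr p - (b-a) powr p"
  using bcd
proof
  assume b: "b = c"
  have "(m-c + (c-d)) powr p - (c-d) powr p \<le> (m-c + (c-a)) powr p - (c-a) powr p"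
    using assms b by (intro powr_incdiff) auto
  thus ?thesis using b by simp
next
  assume bd: "b \<le> d"
  have "(m-b) powr p + (b-a) powr p \<le> (m-a) powr p"
    using powr_superadd[of "m-b" "b-a" p] assms by simp
  moreover have "(m-d) powr p \<le> (m-b) powr p" using assms bd by (intro powr_mono2) auto
  moreover have "(m-c) powr p \<le> (m-d) powr p" using assms by (intro powr_mono2) auto
  moreover have "0 \<le> (c-d) powr p" by simp
  ultimately show ?thesis by linarith
qed

definition cst :: "real \<Rightarrow> real \<Rightarrow> real \<Rightarrow> real" where
  "cst p a b = \<bar>a - b\<bar> powr p"

lemma cst_sym: "cst p a b = cst p b a"
  unfolding cst_def by (simp add: abs_minus_commute)

fun pc :: "real \<Rightarrow> real list \<Rightarrow> real" where
  "pc p [] = 0"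
| "pc p [x] = 0"
| "pc p (x # y # ys) = cst p x y + pc p (y # ys)"

definition cyc :: "real \<Rightarrow> real list \<Rightarrow> real" where
  "cyc p xs = pc p xs + cst p (last xs) (hd xs)"

definition opt :: "real \<Rightarrow> real list \<Rightarrow> real" where
  "opt p z = cst p (z!0) (z!1) + cst p (z!(length z - 1)) (z!(length z - 2))
     + (\<Sum>i<length z - 2. cst p (z!i) (z!(i+2)))"

lemma pc_sum: "pc p xs = (\<Sum>i<length xs - 1. cst p (xs!i) (xs!(Suc i)))"
proof (induction p xs rule: pc.induct)
  case (3 p x y ys)
  have "(\<Sum>i<length (x # y # ys) - 1. cst p ((x # y # ys)!i) ((x # y # ys)!(Suc i)))
      = cst p x y + (\<Sum>i<length (y # ys) - 1. cst p ((y # ys)!i) ((y # ys)!(Suc i)))"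
    by (simp add: sum.lessThan_Suc_shift del: sum.lessThan_Suc)
  then show ?case using 3 by simp
qed auto

lemma sum_cyc:
  assumes "xs \<noteq> []"
  shows "(\<Sum>i<length xs. cst p (xs!i) (xs!((i+1) mod length xs))) = cyc p xs"
proof -
  obtain n where n: "length xs = Suc n" using assms by (cases xs) auto
  have "(\<Sum>i<length xs. cst p (xs!i) (xs!((i+1) mod length xs)))
      = (\<Sum>i<n. cst p (xs!i) (xs!((i+1) mod length xs))) + cst p (xs!n) (xs!0)"
    using n by simp
  also have "(\<Sum>i<n. cst p (xs!i) (xs!((i+1) mod length xs))) = (\<Sum>i<n. cst p (xs!i) (xs!(Suc i)))"
    using n by (intro sum.cong) auto
  also have "\<dots> = pc p xs" using n by (simp add: pc_sum)
  also have "xs!n = last xs" using n assms by (simp add: last_conv_nth)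
  also have "xs!0 = hd xs" using assms by (simp add: hd_conv_nth)
  finally show ?thesis unfolding cyc_def .
qed

lemma pc_snoc: "xs \<noteq> [] \<Longrightarrow> pc p (xs @ [m]) = pc p xs + cst p (last xs) m"
proof (induction p xs rule: pc.induct)
  case (3 p x y ys) then show ?case by simp
qed auto

lemma cyc_snoc: "xs \<noteq> [] \<Longrightarrow> cyc p (xs @ [m]) = pc p xs + cst p (last xs) m + cst p m (hd xs)"
  by (simp add: cyc_def pc_snoc)

lemma cyc_rotate1: "cyc p (rotate1 xs) = cyc p xs"
proof (cases xs)
  case (Cons x ys)
  show ?thesis
  proof (cases ys)
    case (Cons y zs)
    have "pc p ((y # zs) @ [x]) = pc p (y # zs) + cst p (last (y#zs)) x" by (rule pc_snoc) simp
    thus ?thesis using \<open>xs = x # ys\<close> Cons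
      by (simp add: cyc_def cst_sym)
  qed (simp add: Cons)
qed simp

lemma cyc_rotate: "cyc p (rotate k xs) = cyc p xs"
  by (induction k) (simp_all add: rotate_Suc cyc_rotate1)

lemma pc_rev: "pc p (rev xs) = pc p xs"
proof (induction p xs rule: pc.induct)
  case (3 p x y ys)
  have "pc p (rev (x # y # ys)) = pc p (rev (y # ys) @ [x])" by simp
  also have "\<dots> = pc p (rev (y#ys)) + cst p y x" by (subst pc_snoc) (auto simp: last_rev)
  finally show ?case using 3 by (simp add: cst_sym)
qed auto

lemma cyc_rev: "cyc p (rev xs) = cyc p xs"
  by (cases "xs = []") (simp_all add: cyc_def pc_rev hd_rev last_rev cst_sym)

lemma opt_snoc:
  assumes "length z \<ge> 2"
  shows "opt p (z @ [m]) = opt p z + cst p m (z!(length z - 1)) + cst p m (z!(length z - 2))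
            - cst p (z!(length z - 1)) (z!(length z - 2))"
proof -
  define n where "n = length z"
  have n: "n \<ge> 2" using assms n_def by simp
  have s: "(\<Sum>i<n + 1 - 2. cst p ((z@[m])!i) ((z@[m])!(i+2)))
      = (\<Sum>i<n - 2. cst p (z!i) (z!(i+2))) + cst p (z!(n-2)) m"
  proof -
    have "n + 1 - 2 = Suc (n - 2)" using n by simp
    hence "(\<Sum>i<n + 1 - 2. cst p ((z@[m])!i) ((z@[m])!(i+2)))
        = (\<Sum>i<n-2. cst p ((z@[m])!i) ((z@[m])!(i+2))) + cst p ((z@[m])!(n-2)) ((z@[m])!(n-2+2))"
      by simp
    also have "(\<Sum>i<n-2. cst p ((z@[m])!i) ((z@[m])!(i+2))) = (\<Sum>i<n - 2. cst p (z!i) (z!(i+2)))"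
      using n by (intro sum.cong) (auto simp: nth_append n_def)
    also have "(z@[m])!(n-2) = z!(n-2)" using n by (simp add: nth_append n_def[symmetric])
    also have "(z@[m])!(n-2+2) = m"
    proof -
      have eqn: "n - 2 + 2 = n" using n by linarith
      show ?thesis by (subst eqn) (simp add: n_def)
    qed
    finally show ?thesis .
  qed
  have e0: "(z@[m])!0 = z!0" "(z@[m])!1 = z!1" using n by (auto simp: nth_append n_def)
  have e1: "(z@[m])!(n+1-1) = m" using n by (simp add: nth_append n_def)
  have "n+1-2 = n-1" using n by simp
  moreover have "n - 1 < n" using n by linarith
  ultimately have e2: "(z@[m])!(n+1-2) = z!(n-1)" by (simp add: nth_append n_def)
  show ?thesis unfolding opt_def using s e0 e1 e2 by (simp add: n_def[symmetric] cst_sym)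
qed

lemma sort_mset_eq: "mset xs = mset ys \<Longrightarrow> sort xs = sort ys"
  by (rule properties_for_sort) simp_all

lemma two_sub:
  fixes z' :: "real list"
  assumes s: "sorted (z' @ [d, c])" and sub: "{#u, v#} \<subseteq># mset (z' @ [d, c])"
  shows "min u v \<le> d \<and> (max u v = c \<or> max u v \<le> d)"
proof -
  have zd: "\<forall>x\<in>set z'. x \<le> d" using s by (auto simp: sorted_append)
  have dc: "d \<le> c" using s by (auto simp: sorted_append)
  have el: "w \<le> d \<or> w = c" if w: "w \<in># {#u, v#}" for w
  proof -
    have "w \<in> set (z' @ [d, c])" using mset_subset_eqD[OF sub w] by simp
    thus ?thesis using zd by auto
  qed
  hence uv: "u \<le> d \<or> u = c" "v \<le> d \<or> v = c" by auto
  show ?thesis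
  proof (cases "u \<le> d \<or> v \<le> d")
    case True thus ?thesis using uv dc by auto
  next
    case False
    hence "u = c" "v = c" "d < c" using uv by auto
    hence "count {#u, v#} c = 2" by simp
    moreover have "count (mset (z' @ [d, c])) c = 1"
      using zd \<open>d < c\<close> by (auto simp: count_mset_0_iff)
    moreover have "count {#u, v#} c \<le> count (mset (z' @ [d, c])) c"
      using sub by (simp add: subseteq_mset_def)
    ultimately show ?thesis by simp
  qed
qed

lemma hd_last_sub: "length ys \<ge> 2 \<Longrightarrow> {#hd ys, last ys#} \<subseteq># mset ys"
proof -
  assume "length ys \<ge> 2"
  then obtain a ys' where ys: "ys = a # ys'" "ys' \<noteq> []" by (cases ys) (auto simp: Suc_le_eq)
  then obtain zs b where "ys' = zs @ [b]" by (cases ys' rule: rev_cases) auto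
  thus ?thesis using ys by simp
qed

lemma cyc_two: "cyc p [a, b] = 2 * cst p a b"
  by (simp add: cyc_def cst_sym)

lemma opt_two: "length z = 2 \<Longrightarrow> opt p z = 2 * cst p (z!0) (z!1)"
  by (simp add: opt_def cst_sym)

lemma lower_bound:
  assumes p: "p \<ge> 1"
  shows "length xs \<ge> 2 \<Longrightarrow> opt p (sort xs) \<le> cyc p xs"
proof (induction "length xs" arbitrary: xs rule: less_induct)
  case less
  show ?case
  proof (cases "length xs = 2")
    case True
    then obtain a b where xs: "xs = [a, b]"
      by (metis One_nat_def Suc_1 length_0_conv length_Suc_conv)
    have "opt p (sort xs) = 2 * cst p a b"
      using xs by (auto simp: opt_two cst_sym)
    thus ?thesis using xs by (simp add: cyc_two)
  next
    case False
    hence n3: "length xs \<ge> 3" using less.prems by simp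
    define m where "m = Max (set xs)"
    have "xs \<noteq> []" using n3 by auto
    hence "m \<in> set xs" unfolding m_def by simp
    then obtain A B where xsAB: "xs = A @ m # B" by (meson split_list)
    define ys where "ys = B @ A"
    have rot: "rotate (length (A @ [m])) ((A @ [m]) @ B) = B @ A @ [m]"
      by (rule rotate_append)
    have cyceq: "cyc p xs = cyc p (ys @ [m])"
      using rot xsAB cyc_rotate[of p "length (A @ [m])" xs] by (simp add: ys_def)
    have lys: "length ys \<ge> 2" "length ys < length xs" using n3 xsAB ys_def by auto
    have msx: "mset xs = mset ys + {#m#}" using xsAB ys_def by simp
    have ysm: "\<forall>y\<in>set ys. y \<le> m" using xsAB ys_def m_def
      by (metis List.finite_set Max_ge Un_iff set_append msx set_mset_mset set_mset_union)
    define z where "z = sort ys"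
    have sortx: "sort xs = z @ [m]"
      by (rule properties_for_sort) (use msx ysm in \<open>auto simp: z_def sorted_append\<close>)
    have lz: "length z = length ys" by (simp add: z_def)
    obtain z' d c where zdc: "z = z' @ [d, c]"
    proof -
      obtain z1 c where "z = z1 @ [c]" using lz lys by (cases z rule: rev_cases) auto
      moreover obtain z' d where "z1 = z' @ [d]" using lz lys \<open>z = z1 @ [c]\<close>
        by (cases z1 rule: rev_cases) auto
      ultimately show ?thesis using that by simp
    qed
    have zs: "sorted (z' @ [d, c])" using zdc z_def by (metis sorted_sort)
    have IH: "opt p z \<le> cyc p ys" using less.hyps[OF lys(2) lys(1)] by (simp add: z_def)
    have ost: "opt p (z @ [m]) = opt p z + cst p m c + cst p m d - cst p c d"
      using opt_snoc[of z p m] lz lys zdc by (simp add: nth_append)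
    have ysne: "ys \<noteq> []" using lys by auto
    have cy: "cyc p (ys @ [m]) = cyc p ys - cst p (last ys) (hd ys) + cst p (last ys) m + cst p m (hd ys)"
      using cyc_snoc[OF ysne, of p m] by (simp add: cyc_def)
    define u where "u = hd ys"
    define v where "v = last ys"
    have sub: "{#u, v#} \<subseteq># mset (z' @ [d, c])"
      using hd_last_sub[OF lys(1)] zdc z_def u_def v_def by (metis mset_sort)
    from two_sub[OF zs sub] have tw: "min u v \<le> d \<and> (max u v = c \<or> max u v \<le> d)" .
    have uvm: "u \<le> m" "v \<le> m" using ysm ysne u_def v_def by auto
    have cm: "c \<le> m" "d \<le> c" using ysm zdc z_def zs
      by (auto simp: sorted_append) (metis set_sort subsetD z_def zdc in_set_conv_decomp set_append Un_iff list.set_intros(1) ysm insert_iff list.set(2))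
    have key: "(m-c) powr p + (m-d) powr p - (c-d) powr p
       \<le> (m - min u v) powr p + (m - max u v) powr p - (max u v - min u v) powr p"
      using key_ineq[OF p cm(1) cm(2), of "min u v" "max u v"] tw uvm by auto
    have "cst p m c + cst p m d - cst p c d \<le> cst p v m + cst p m u - cst p v u"
    proof -
      have "cst p m c = (m-c) powr p" "cst p m d = (m-d) powr p" "cst p c d = (c-d) powr p"
        using cm by (auto simp: cst_def)
      moreover have "cst p v m + cst p m u - cst p v u
          = (m - min u v) powr p + (m - max u v) powr p - (max u v - min u v) powr p"
        using uvm by (cases "u \<le> v") (auto simp: cst_def abs_minus_commute min_def max_def)
      ultimately show ?thesis using key by simp
    qed
    thus ?thesis using IH cyceq cy ost sortx u_def v_def by simp
  qed
qed

lemma upper_bound: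
  "sorted z \<Longrightarrow> length z \<ge> 2 \<Longrightarrow> \<exists>L. mset L = mset z \<and> L \<noteq> [] \<and> hd L = z!(length z - 1)
     \<and> last L = z!(length z - 2) \<and> cyc p L = opt p z"
proof (induction z rule: rev_induct)
  case Nil thus ?case by simp
next
  case (snoc m z)
  show ?case
  proof (cases "length z = 1")
    case True
    then obtain a where z: "z = [a]" by (metis One_nat_def length_0_conv length_Suc_conv)
    show ?thesis using z
      by (intro exI[of _ "[m, a]"]) (auto simp: cyc_two opt_two cst_sym)
  next
    case False
    hence lz: "length z \<ge> 2" using snoc.prems by simp
    from snoc.IH[OF _ lz] snoc.prems obtain L where L: "mset L = mset z" "L \<noteq> []"
      "hd L = z!(length z - 1)" "last L = z!(length z - 2)" "cyc p L = opt p z"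
      by (auto simp: sorted_append)
    define L2 where "L2 = rev (L @ [m])"
    have "cyc p L2 = cyc p (L @ [m])" unfolding L2_def by (rule cyc_rev)
    also have "\<dots> = cyc p L - cst p (last L) (hd L) + cst p (last L) m + cst p m (hd L)"
      using cyc_snoc[OF L(2), of p m] by (simp add: cyc_def)
    also have "\<dots> = opt p (z @ [m])"
      using opt_snoc[OF lz, of p m] L by (simp add: cst_sym)
    finally have c2: "cyc p L2 = opt p (z @ [m])" .
    show ?thesis
      using L c2 lz by (intro exI[of _ L2]) (auto simp: L2_def hd_rev last_rev nth_append)
  qed
qed

lemma cycle_cost_cyc:
  assumes "N \<ge> 1"
  shows "cycle_cost p N x \<sigma> = cyc p (map (\<lambda>i. x (\<sigma> i)) [0..<N])"
proof -
  let ?xs = "map (\<lambda>i. x (\<sigma> i)) [0..<N]"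
  have ne: "?xs \<noteq> []" using assms by simp
  have "cyc p ?xs = (\<Sum>i<length ?xs. cst p (?xs!i) (?xs!((i+1) mod length ?xs)))"
    using sum_cyc[OF ne] by simp
  also have "\<dots> = cycle_cost p N x \<sigma>"
    unfolding cycle_cost_def cst_def using assms
    by (intro sum.cong) (auto simp: nth_map)
  finally show ?thesis by simp
qed

lemma min_cycle_cost_eq:
  assumes p: "p \<ge> 1" and N: "N \<ge> 2"
  shows "min_cycle_cost p N x = opt p (sort (map x [0..<N]))"
proof -
  let ?xs = "map x [0..<N]"
  let ?S = "{cycle_cost p N x \<sigma> | \<sigma>. \<sigma> permutes {..<N}}"
  have pl: "map (\<lambda>i. x (\<sigma> i)) [0..<N] = permute_list \<sigma> ?xs" if "\<sigma> permutes {..<N}" for \<sigma>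
  proof (intro nth_equalityI)
    fix i assume "i < length (map (\<lambda>i. x (\<sigma> i)) [0..<N])"
    hence i: "i < N" by simp
    hence "\<sigma> i < N" using permutes_in_image[OF that] by simp
    thus "map (\<lambda>i. x (\<sigma> i)) [0..<N] ! i = permute_list \<sigma> ?xs ! i"
      using i that by (simp add: permute_list_nth)
  qed simp
  have fin: "finite ?S"
  proof -
    have "?S = (\<lambda>\<sigma>. cycle_cost p N x \<sigma>) ` {\<sigma>. \<sigma> permutes {..<N}}" by auto
    thus ?thesis using finite_permutations[of "{..<N}"] by simp
  qed
  have lb: "opt p (sort ?xs) \<le> s" if "s \<in> ?S" for s
  proof -
    obtain \<sigma> where \<sigma>: "\<sigma> permutes {..<N}" "s = cycle_cost p N x \<sigma>" using \<open>s \<in> ?S\<close> by auto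
    have "s = cyc p (permute_list \<sigma> ?xs)" using \<sigma> N pl cycle_cost_cyc by simp
    moreover have "sort (permute_list \<sigma> ?xs) = sort ?xs"
      by (rule sort_mset_eq) (simp add: mset_permute_list \<sigma>)
    moreover have "opt p (sort (permute_list \<sigma> ?xs)) \<le> cyc p (permute_list \<sigma> ?xs)"
      using N by (intro lower_bound p) simp
    ultimately show ?thesis by simp
  qed
  obtain L where L: "mset L = mset (sort ?xs)" "cyc p L = opt p (sort ?xs)"
    using upper_bound[of "sort ?xs" p] N by auto
  obtain \<sigma> where \<sigma>: "\<sigma> permutes {..<length ?xs}" "permute_list \<sigma> ?xs = L"
    using mset_eq_permutation[of L ?xs] L by auto
  have "cycle_cost p N x \<sigma> = opt p (sort ?xs)"
    using \<sigma> L pl[of \<sigma>] cycle_cost_cyc[of N p x \<sigma>] N by simp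
  hence mem: "opt p (sort ?xs) \<in> ?S" using \<sigma> by (metis (mono_tags, lifting) length_map length_upt minus_nat.diff_0 mem_Collect_eq)
  show ?thesis unfolding min_cycle_cost_def
    by (rule Min_eqI[OF fin]) (use lb mem in auto)
qed

abbreviation UM :: "real measure" where "UM \<equiv> uniform_measure lborel {0..1::real}"

lemma UM_prob: "prob_space UM"
  by (rule prob_space_uniform_measure) simp_all

lemma sets_UM[simp, measurable_cong]: "sets UM = sets borel" by simp
lemma space_UM[simp]: "space UM = UNIV" by simp

interpretation UMP: product_sigma_finite "\<lambda>_::nat. UM"
  unfolding product_sigma_finite_def
  using prob_space_imp_sigma_finite[OF UM_prob] by simp

definition cnt :: "real set \<Rightarrow> nat set \<Rightarrow> (nat \<Rightarrow> real) \<Rightarrow> real" where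
  "cnt S J w = (\<Sum>c\<in>J. indicator S (w c))"

lemma cnt_card: assumes "finite J" shows "cnt S J w = real (card {c\<in>J. w c \<in> S})"
proof -
  note True = assms
  have "cnt S J w = (\<Sum>c\<in>J. if c \<in> {c\<in>J. w c \<in> S} then 1 else 0)"
    unfolding cnt_def by (intro sum.cong) (auto simp: indicator_def)
  also have "\<dots> = real (card {c\<in>J. w c \<in> S})"
    using True by (subst sum.If_cases) (simp_all add: Int_def)
  finally show ?thesis .
qed

lemma cnt_measurable[measurable]:
  assumes "S \<in> sets borel" "finite J"
  shows "(\<lambda>w. cnt S J w) \<in> borel_measurable (PiM J (\<lambda>_. UM))"
  unfolding cnt_def using assms by measurable

lemma cnt_upd: "finite J \<Longrightarrow> i \<notin> J \<Longrightarrow> cnt S (insert i J) (w(i := t)) = indicator S t + cnt S J w"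
  unfolding cnt_def by (simp add: sum.insert) (intro sum.cong, auto)

lemma h_meas: "(\<lambda>y::real. ennreal (if y = c then 1 else 0)) \<in> borel_measurable borel"
  by measurable

lemma cnt_ind_meas[measurable]: "finite K \<Longrightarrow> S \<in> sets borel \<Longrightarrow>
   (\<lambda>w. ennreal (if cnt S K w = c then 1 else 0)) \<in> borel_measurable (PiM K (\<lambda>_. UM))"
  using measurable_compose[OF cnt_measurable h_meas] by simp

lemma ennreal_if_split: "ennreal (if b then x else 0) = ennreal x * ennreal (if b then 1 else 0)"
  by simp

lemma binom:
  assumes "finite J" and S[measurable]: "S \<in> sets borel"
  shows "(\<integral>\<^sup>+ w. ennreal (if cnt S J w = 0 then 1 else 0) \<partial>PiM J (\<lambda>_. UM))
            = ennreal ((1 - measure UM S) ^ card J)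
       \<and> (\<integral>\<^sup>+ w. ennreal (if cnt S J w = 1 then 1 else 0) \<partial>PiM J (\<lambda>_. UM))
            = ennreal (card J * measure UM S * (1 - measure UM S) ^ (card J - 1))"
  using assms(1)
proof (induction J rule: finite_induct)
  case empty
  interpret P: prob_space "PiM {} (\<lambda>_::nat. UM)"
    by (rule prob_space_PiM) (simp add: UM_prob)
  show ?case by (simp add: cnt_def P.emeasure_space_1)
next
  case (insert i J)
  interpret U: prob_space UM by (rule UM_prob)
  define q where "q = measure UM S"
  have q01: "0 \<le> q" "q \<le> 1" unfolding q_def by (rule measure_nonneg, rule U.prob_le_1)
  have eS: "(\<integral>\<^sup>+ t. indicator S t \<partial>UM) = ennreal q" 
    using S by (simp add: q_def U.emeasure_eq_measure)
  have eSc: "(\<integral>\<^sup>+ t. indicator (UNIV - S) t \<partial>UM) = ennreal (1 - q)"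
  proof -
    have "(\<integral>\<^sup>+ t. indicator (UNIV - S) t \<partial>UM) = emeasure UM (space UM - S)" using S by simp
    also have "\<dots> = ennreal (1 - q)" using U.prob_compl[of S] S
      by (simp add: q_def U.emeasure_eq_measure)
    finally show ?thesis .
  qed
  have in0: "(\<integral>\<^sup>+ t. ennreal (if cnt S (insert i J) (w(i := t)) = 0 then 1 else 0) \<partial>UM)
      = ennreal (1 - q) * ennreal (if cnt S J w = 0 then 1 else 0)" for w
  proof (cases "cnt S J w = 0")
    case True
    have "(\<integral>\<^sup>+ t. ennreal (if cnt S (insert i J) (w(i := t)) = 0 then 1 else 0) \<partial>UM)
        = (\<integral>\<^sup>+ t. indicator (UNIV - S) t \<partial>UM)"
    proof (intro nn_integral_cong)
      fix t
      have "cnt S (insert i J) (w(i := t)) = indicator S t" using cnt_upd[OF insert(1,2)] True by simp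
      thus "ennreal (if cnt S (insert i J) (w(i := t)) = 0 then 1 else 0) = indicator (UNIV - S) t"
        by (simp split: split_indicator)
    qed
    also have "\<dots> = ennreal (1 - q)" by (rule eSc)
    also have "ennreal (1 - q) = ennreal (1 - q) * ennreal (if cnt S J w = 0 then 1 else 0)"
      using True by simp
    finally show ?thesis .
  next
    case False
    have "cnt S J w \<ge> 0" unfolding cnt_def by (intro sum_nonneg) simp
    hence "cnt S J w > 0" using False by linarith
    have "cnt S (insert i J) (w(i := t)) \<noteq> 0" for t
    proof -
      have "indicator S t \<ge> (0::real)" by simp
      moreover have "cnt S (insert i J) (w(i := t)) = indicator S t + cnt S J w" by (rule cnt_upd[OF insert(1,2)])
      ultimately show ?thesis using \<open>cnt S J w > 0\<close> by linarith
    qed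
    thus ?thesis using False by simp
  qed
  have in1: "(\<integral>\<^sup>+ t. ennreal (if cnt S (insert i J) (w(i := t)) = 1 then 1 else 0) \<partial>UM)
      = ennreal q * ennreal (if cnt S J w = 0 then 1 else 0) + ennreal (1 - q) * ennreal (if cnt S J w = 1 then 1 else 0)" for w
  proof -
    obtain k where k: "cnt S J w = real k" using cnt_card[OF insert(1)] by blast
    have cu: "cnt S (insert i J) (w(i := t)) = indicator S t + real k" for t
      using cnt_upd[OF insert(1,2)] k by simp
    show ?thesis
    proof (cases "k = 0")
      case True
      have "(\<integral>\<^sup>+ t. ennreal (if cnt S (insert i J) (w(i := t)) = 1 then 1 else 0) \<partial>UM)
          = (\<integral>\<^sup>+ t. indicator S t \<partial>UM)"
        by (intro nn_integral_cong) (simp add: cu True split: split_indicator)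
      also have "\<dots> = ennreal q" by (rule eS)
      also have "ennreal q = ennreal q * ennreal (if cnt S J w = 0 then 1 else 0) + ennreal (1 - q) * ennreal (if cnt S J w = 1 then 1 else 0)"
        using True k by simp
      finally show ?thesis .
    next
      case False
      show ?thesis
      proof (cases "k = 1")
        case True
        have "(\<integral>\<^sup>+ t. ennreal (if cnt S (insert i J) (w(i := t)) = 1 then 1 else 0) \<partial>UM)
            = (\<integral>\<^sup>+ t. indicator (UNIV - S) t \<partial>UM)"
          by (intro nn_integral_cong) (simp add: cu True split: split_indicator)
        also have "\<dots> = ennreal (1 - q)" by (rule eSc)
        also have "ennreal (1 - q) = ennreal q * ennreal (if cnt S J w = 0 then 1 else 0) + ennreal (1 - q) * ennreal (if cnt S J w = 1 then 1 else 0)"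
          using True k by simp
        finally show ?thesis .
      next
        case False
        hence "k \<ge> 2" using \<open>k \<noteq> 0\<close> by simp
        have "cnt S (insert i J) (w(i := t)) \<noteq> 1" for t
        proof -
          have "indicator S t \<ge> (0::real)" by simp
          moreover have "real k \<ge> 2" using \<open>k \<ge> 2\<close> by simp
          ultimately show ?thesis using cu[of t] by linarith
        qed
        hence "(\<integral>\<^sup>+ t. ennreal (if cnt S (insert i J) (w(i := t)) = 1 then 1 else 0) \<partial>UM) = 0"
          by simp
        also have "0 = ennreal q * ennreal (if cnt S J w = 0 then 1 else 0) + ennreal (1 - q) * ennreal (if cnt S J w = 1 then 1 else 0)"
          using False \<open>k \<noteq> 0\<close> k by simp
        finally show ?thesis .
      qed
    qed
  qed
  have m0: "(\<lambda>w. ennreal (if cnt S K w = 0 then 1 else 0)) \<in> borel_measurable (PiM K (\<lambda>_. UM))"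
    if "finite K" for K using that cnt_ind_meas by simp
  have m1: "(\<lambda>w. ennreal (if cnt S K w = 1 then 1 else 0)) \<in> borel_measurable (PiM K (\<lambda>_. UM))"
    if "finite K" for K using that cnt_ind_meas by simp
  have fi: "finite (insert i J)" using insert by simp
  have "(\<integral>\<^sup>+ w. ennreal (if cnt S (insert i J) w = 0 then 1 else 0) \<partial>PiM (insert i J) (\<lambda>_. UM))
      = (\<integral>\<^sup>+ w. ennreal (1 - q) * ennreal (if cnt S J w = 0 then 1 else 0) \<partial>PiM J (\<lambda>_. UM))"
    by (subst UMP.product_nn_integral_insert[OF insert(1,2) m0[OF fi]]) (simp add: in0)
  also have "\<dots> = ennreal (1 - q) * ennreal ((1 - q) ^ card J)"
    using insert by (subst nn_integral_cmult) (simp_all add: q_def)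
  also have "\<dots> = ennreal ((1 - q) ^ card (insert i J))"
    using insert q01 by (simp add: ennreal_mult[symmetric])
  finally have r0: "(\<integral>\<^sup>+ w. ennreal (if cnt S (insert i J) w = 0 then 1 else 0) \<partial>PiM (insert i J) (\<lambda>_. UM))
      = ennreal ((1 - q) ^ card (insert i J))" .
  have "(\<integral>\<^sup>+ w. ennreal (if cnt S (insert i J) w = 1 then 1 else 0) \<partial>PiM (insert i J) (\<lambda>_. UM))
      = (\<integral>\<^sup>+ w. ennreal q * ennreal (if cnt S J w = 0 then 1 else 0) + ennreal (1 - q) * ennreal (if cnt S J w = 1 then 1 else 0) \<partial>PiM J (\<lambda>_. UM))"
    by (subst UMP.product_nn_integral_insert[OF insert(1,2) m1[OF fi]]) (simp add: in1)
  also have "\<dots> = ennreal q * ennreal ((1 - q) ^ card J) + ennreal (1 - q) * ennreal (card J * q * (1 - q) ^ (card J - 1))"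
    using insert by (subst nn_integral_add) (simp_all add: nn_integral_cmult q_def)
  also have "\<dots> = ennreal (q * (1 - q) ^ card J + (1 - q) * (card J * q * (1 - q) ^ (card J - 1)))"
    using q01 by (simp add: ennreal_mult[symmetric] ennreal_plus[symmetric] del: ennreal_plus)
  also have "q * (1 - q) ^ card J + (1 - q) * (card J * q * (1 - q) ^ (card J - 1))
      = card (insert i J) * q * (1 - q) ^ (card (insert i J) - 1)"
  proof (cases "card J")
    case 0 thus ?thesis using insert by simp
  next
    case (Suc k) thus ?thesis using insert by (simp add: algebra_simps)
  qed
  finally show ?case using r0 by (simp add: q_def)
qed

definition W :: "nat \<Rightarrow> nat \<Rightarrow> nat \<Rightarrow> real" where
  "W N i j = (if i < j then of_bool (j = i + 2) + of_bool (i = 0 \<and> j = 1) + of_bool (i = N - 2 \<and> j = N - 1) else 0)"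


lemma opt_W:
  assumes "length z = N" "N \<ge> 3"
  shows "opt p z = (\<Sum>i<N. \<Sum>j<N. W N i j * cst p (z!i) (z!j))"
proof -
  have split: "W N i j * cst p (z!i) (z!j) = (if j = i + 2 then cst p (z!i) (z!j) else 0)
      + (if i = 0 \<and> j = 1 then cst p (z!i) (z!j) else 0) + (if i = N - 2 \<and> j = N - 1 then cst p (z!i) (z!j) else 0)" for i j
    using assms by (auto simp: W_def algebra_simps)
  have s1: "(\<Sum>i<N. \<Sum>j<N. (if j = i + 2 then cst p (z!i) (z!j) else 0)) = (\<Sum>i<N - 2. cst p (z!i) (z!(i+2)))"
  proof -
    have "(\<Sum>i<N. \<Sum>j<N. (if j = i + 2 then cst p (z!i) (z!j) else 0)) = (\<Sum>i<N. if i + 2 < N then cst p (z!i) (z!(i+2)) else 0)"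
      by (intro sum.cong refl) (simp add: sum.delta)
    also have "\<dots> = (\<Sum>i\<in>{..<N} \<inter> {i. i + 2 < N}. cst p (z!i) (z!(i+2)))"
      by (subst sum.inter_restrict) auto
    also have "{..<N} \<inter> {i. i + 2 < N} = {..<N-2}" by auto
    finally show ?thesis .
  qed
  have s2: "(\<Sum>i<N. \<Sum>j<N. (if i = 0 \<and> j = 1 then cst p (z!i) (z!j) else 0)) = cst p (z!0) (z!1)"
  proof -
    have "(\<Sum>i<N. \<Sum>j<N. (if i = 0 \<and> j = 1 then cst p (z!i) (z!j) else 0))
        = (\<Sum>i<N. if i = 0 then cst p (z!i) (z!1) else 0)"
      using assms by (intro sum.cong refl) (auto simp: sum.delta)
    also have "\<dots> = cst p (z!0) (z!1)" using assms by (simp add: sum.delta)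
    finally show ?thesis .
  qed
  have s3: "(\<Sum>i<N. \<Sum>j<N. (if i = N - 2 \<and> j = N - 1 then cst p (z!i) (z!j) else 0)) = cst p (z!(N-1)) (z!(N-2))"
  proof -
    have "(\<Sum>i<N. \<Sum>j<N. (if i = N - 2 \<and> j = N - 1 then cst p (z!i) (z!j) else 0))
        = (\<Sum>i<N. if i = N - 2 then cst p (z!i) (z!(N-1)) else 0)"
      using assms by (intro sum.cong refl) (auto simp: sum.delta)
    also have "\<dots> = cst p (z!(N-2)) (z!(N-1))" using assms by (simp add: sum.delta)
    finally show ?thesis by (simp add: cst_sym)
  qed
  have "(\<Sum>i<N. \<Sum>j<N. W N i j * cst p (z!i) (z!j))
      = (\<Sum>i<N. \<Sum>j<N. (if j = i + 2 then cst p (z!i) (z!j) else 0))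
      + (\<Sum>i<N. \<Sum>j<N. (if i = 0 \<and> j = 1 then cst p (z!i) (z!j) else 0))
      + (\<Sum>i<N. \<Sum>j<N. (if i = N - 2 \<and> j = N - 1 then cst p (z!i) (z!j) else 0))"
    by (simp only: split sum.distrib)
  also have "\<dots> = opt p z" unfolding s1 s2 s3 opt_def using assms by simp
  finally show ?thesis by simp
qed

definition gab :: "real \<Rightarrow> nat \<Rightarrow> nat \<Rightarrow> nat \<Rightarrow> (nat \<Rightarrow> real) \<Rightarrow> real" where
  "gab p N a b x = (if x a < x b then (x b - x a) powr p else 0) *
    (of_bool (cnt {x a<..<x b} ({..<N} - {a,b}) x = 1) + of_bool (cnt {..<x b} ({..<N} - {a,b}) x = 0)
     + of_bool (cnt {x a<..} ({..<N} - {a,b}) x = 0))"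

definition rk :: "nat \<Rightarrow> (nat \<Rightarrow> real) \<Rightarrow> nat \<Rightarrow> nat" where
  "rk N x a = card {c \<in> {..<N}. x c < x a}"

lemma rk_pi:
  assumes inj: "inj_on x {..<N}" and \<pi>: "\<pi> permutes {..<N}"
    and s: "sorted (map (\<lambda>i. x (\<pi> i)) [0..<N])" and i: "i < N"
  shows "rk N x (\<pi> i) = i"
proof -
  have lt: "x (\<pi> j) < x (\<pi> i) \<longleftrightarrow> j < i" if "j < N" for j
  proof
    assume "x (\<pi> j) < x (\<pi> i)"
    show "j < i"
    proof (rule ccontr)
      assume "\<not> j < i"
      hence "x (\<pi> i) \<le> x (\<pi> j)" using s that i by (auto simp: sorted_iff_nth_mono)
      thus False using \<open>x (\<pi> j) < x (\<pi> i)\<close> by simp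
    qed
  next
    assume "j < i"
    hence le: "x (\<pi> j) \<le> x (\<pi> i)" using s that i by (auto simp: sorted_iff_nth_mono)
    have "\<pi> j \<noteq> \<pi> i" using \<open>j < i\<close> permutes_inj[OF \<pi>] by (metis less_irrefl inj_eq)
    moreover have "\<pi> j \<in> {..<N}" "\<pi> i \<in> {..<N}" using that i permutes_in_image[OF \<pi>] by auto
    ultimately have "x (\<pi> j) \<noteq> x (\<pi> i)" using inj by (metis inj_on_eq_iff)
    thus "x (\<pi> j) < x (\<pi> i)" using le by simp
  qed
  have "{c \<in> {..<N}. x c < x (\<pi> i)} = \<pi> ` {..<i}"
  proof
    show "{c \<in> {..<N}. x c < x (\<pi> i)} \<subseteq> \<pi> ` {..<i}"
    proof
      fix c assume c: "c \<in> {c \<in> {..<N}. x c < x (\<pi> i)}"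
      have "c \<in> \<pi> ` {..<N}" using c permutes_image[OF \<pi>] by simp
      then obtain j where j: "j < N" "c = \<pi> j" by auto
      thus "c \<in> \<pi> ` {..<i}" using lt[OF j(1)] c by auto
    qed
    show "\<pi> ` {..<i} \<subseteq> {c \<in> {..<N}. x c < x (\<pi> i)}"
    proof
      fix c assume "c \<in> \<pi> ` {..<i}"
      then obtain j where j: "j < i" "c = \<pi> j" by auto
      have jN: "j < N" using j i by simp
      have "\<pi> j < N" using permutes_in_image[OF \<pi>] jN by simp
      moreover have "x (\<pi> j) < x (\<pi> i)" using lt[OF jN] j by simp
      ultimately show "c \<in> {c \<in> {..<N}. x c < x (\<pi> i)}" using j by simp
    qed
  qed
  moreover have "card (\<pi> ` {..<i}) = i"
  proof -
    have "inj_on \<pi> {..<i}" using permutes_inj[OF \<pi>] by (rule inj_on_subset) simp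
    thus ?thesis by (simp add: card_image)
  qed
  ultimately show ?thesis unfolding rk_def by simp
qed

lemma rk_mono:
  assumes "a < N" "x a < x b"
  shows "rk N x a < rk N x b"
proof -
  have "{c \<in> {..<N}. x c < x a} \<subset> {c \<in> {..<N}. x c < x b}"
    using assms by auto
  thus ?thesis unfolding rk_def by (intro psubset_card_mono) auto
qed

lemma rk_less:
  assumes "a < N" shows "rk N x a < N"
proof -
  have "{c \<in> {..<N}. x c < x a} \<subseteq> {..<N} - {a}" by auto
  hence "rk N x a \<le> card ({..<N} - {a})" unfolding rk_def by (intro card_mono) auto
  thus ?thesis using assms by simp
qed

lemma pair_eq:
  assumes inj: "inj_on x {..<N}" and a: "a < N" and b: "b < N" and ab: "a \<noteq> b"
  shows "W N (rk N x a) (rk N x b) * cst p (x a) (x b) = gab p N a b x"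
proof -
  define J where "J = {..<N} - {a,b}"
  have fJ: "finite J" unfolding J_def by simp
  have xne: "x a \<noteq> x b" using inj a b ab by (metis inj_on_eq_iff lessThan_iff)
  show ?thesis
  proof (cases "x a < x b")
    case False
    hence lt: "x b < x a" using xne by simp
    have "rk N x b < rk N x a" by (rule rk_mono[OF b lt])
    thus ?thesis using False unfolding W_def gab_def by simp
  next
    case True
    define ra where "ra = rk N x a"
    define rb where "rb = rk N x b"
    define kA where "kA = card {c\<in>J. x c \<in> {x a<..<x b}}"
    define kB where "kB = card {c\<in>J. x c \<in> {..<x b}}"
    define kC where "kC = card {c\<in>J. x c \<in> {x a<..}}"
    have inj': "c \<in> {..<N} \<Longrightarrow> x c = x a \<Longrightarrow> c = a" for c using inj a by (metis inj_on_eq_iff lessThan_iff)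
    have e1: "{c \<in> {..<N}. x c < x b} = {c \<in> {..<N}. x c < x a} \<union> ({a} \<union> {c\<in>J. x c \<in> {x a<..<x b}})"
    proof (intro equalityI subsetI)
      fix c assume c: "c \<in> {c \<in> {..<N}. x c < x b}"
      show "c \<in> {c \<in> {..<N}. x c < x a} \<union> ({a} \<union> {c\<in>J. x c \<in> {x a<..<x b}})"
      proof (cases "x c < x a")
        case False
        show ?thesis
        proof (cases "x c = x a")
          case True thus ?thesis using inj' c by auto
        next
          case False
          hence "x a < x c" using \<open>\<not> x c < x a\<close> by simp
          thus ?thesis using c unfolding J_def by auto
        qed
      qed (use c in auto)
    qed (use True a in \<open>auto simp: J_def\<close>)
    have rb1: "rb = ra + (1 + kA)"
      unfolding rb_def ra_def kA_def rk_def e1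
      by (subst card_Un_disjoint) (auto simp: J_def)
    have e2: "{c \<in> {..<N}. x c < x b} = insert a {c\<in>J. x c \<in> {..<x b}}"
      using True a by (auto simp: J_def)
    have rb2: "rb = 1 + kB"
      unfolding rb_def kB_def rk_def e2 by (subst card_insert_disjoint) (auto simp: J_def fJ)
    have e3: "{..<N} = {c \<in> {..<N}. x c < x a} \<union> ({a} \<union> {c \<in> {..<N}. x a < x c})"
    proof (intro equalityI subsetI)
      fix c assume c: "c \<in> {..<N}"
      consider "x c < x a" | "x c = x a" | "x a < x c" by linarith
      thus "c \<in> {c \<in> {..<N}. x c < x a} \<union> ({a} \<union> {c \<in> {..<N}. x a < x c})"
        using c inj'[of c] by cases auto
    qed (use a in auto)
    have N3: "N = ra + (1 + card {c \<in> {..<N}. x a < x c})"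
    proof -
      have "N = card {..<N}" by simp
      also have "\<dots> = card ({c \<in> {..<N}. x c < x a} \<union> ({a} \<union> {c \<in> {..<N}. x a < x c}))"
        by (rule arg_cong[where f=card, OF e3])
      also have "\<dots> = ra + (1 + card {c \<in> {..<N}. x a < x c})"
        unfolding ra_def rk_def by (subst card_Un_disjoint) auto
      finally show ?thesis .
    qed
    have e4: "{c \<in> {..<N}. x a < x c} = insert b {c\<in>J. x c \<in> {x a<..}}"
      using True b by (auto simp: J_def)
    have ab4: "card {c \<in> {..<N}. x a < x c} = 1 + kC"
      unfolding kC_def e4 by (subst card_insert_disjoint) (auto simp: J_def fJ)
    have rab: "ra < rb" unfolding ra_def rb_def by (rule rk_mono[OF a True])
    have rbN: "rb < N" unfolding rb_def by (rule rk_less[OF b])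
    have cA: "cnt {x a<..<x b} J x = real kA" unfolding kA_def by (rule cnt_card[OF fJ])
    have cB: "cnt {..<x b} J x = real kB" unfolding kB_def by (rule cnt_card[OF fJ])
    have cC: "cnt {x a<..} J x = real kC" unfolding kC_def by (rule cnt_card[OF fJ])
    have w1: "(rb = ra + 2) \<longleftrightarrow> kA = 1" using rb1 by simp
    have w2: "(ra = 0 \<and> rb = 1) \<longleftrightarrow> kB = 0" using rb2 rab by auto
    have w3: "(ra = N - 2 \<and> rb = N - 1) \<longleftrightarrow> kC = 0" using N3 ab4 rab rbN by auto
    have cs: "cst p (x a) (x b) = (x b - x a) powr p" using True by (simp add: cst_def)
    show ?thesis
      unfolding gab_def W_def ra_def[symmetric] rb_def[symmetric] J_def[symmetric] cA cB cC cs
      using rab True w1 w2 w3 by (simp add: mult.commute)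
  qed
qed

lemma opt_pairs:
  assumes N: "N \<ge> 3" and inj: "inj_on x {..<N}"
  shows "opt p (sort (map x [0..<N])) = (\<Sum>a<N. \<Sum>b\<in>{..<N}-{a}. gab p N a b x)"
proof -
  define z where "z = sort (map x [0..<N])"
  obtain \<pi> where \<pi>: "\<pi> permutes {..<length (map x [0..<N])}" "permute_list \<pi> (map x [0..<N]) = z"
    using mset_eq_permutation[of z "map x [0..<N]"] unfolding z_def by auto
  have \<pi>N: "\<pi> permutes {..<N}" using \<pi>(1) by simp
  have zi: "z!i = x (\<pi> i)" if "i < N" for i
  proof -
    have "z!i = map x [0..<N] ! \<pi> i" using \<pi> that by (metis length_map length_upt minus_nat.diff_0 permute_list_nth)
    also have "\<dots> = x (\<pi> i)" using permutes_in_image[OF \<pi>N] that by simp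
    finally show ?thesis .
  qed
  have lz: "length z = N" unfolding z_def by simp
  have "map (\<lambda>i. x (\<pi> i)) [0..<N] = z" using zi lz by (intro nth_equalityI) auto
  hence srt: "sorted (map (\<lambda>i. x (\<pi> i)) [0..<N])" unfolding z_def by simp
  have rk: "rk N x (\<pi> i) = i" if "i < N" for i by (rule rk_pi[OF inj \<pi>N srt that])
  have bij: "bij_betw \<pi> {..<N} {..<N}" by (rule permutes_imp_bij[OF \<pi>N])
  have "opt p z = (\<Sum>i<N. \<Sum>j<N. W N i j * cst p (z!i) (z!j))" by (rule opt_W[OF lz N])
  also have "\<dots> = (\<Sum>i<N. \<Sum>j<N. W N (rk N x (\<pi> i)) (rk N x (\<pi> j)) * cst p (x (\<pi> i)) (x (\<pi> j)))"
    by (intro sum.cong refl) (simp add: zi rk)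
  also have "\<dots> = (\<Sum>i<N. \<Sum>b<N. W N (rk N x (\<pi> i)) (rk N x b) * cst p (x (\<pi> i)) (x b))"
  proof (rule sum.cong[OF refl])
    fix i
    show "(\<Sum>j<N. W N (rk N x (\<pi> i)) (rk N x (\<pi> j)) * cst p (x (\<pi> i)) (x (\<pi> j)))
        = (\<Sum>b<N. W N (rk N x (\<pi> i)) (rk N x b) * cst p (x (\<pi> i)) (x b))"
      by (rule sum.reindex_bij_betw[OF bij, where g = "\<lambda>b. W N (rk N x (\<pi> i)) (rk N x b) * cst p (x (\<pi> i)) (x b)"])
  qed
  also have "\<dots> = (\<Sum>a<N. \<Sum>b<N. W N (rk N x a) (rk N x b) * cst p (x a) (x b))"
    by (rule sum.reindex_bij_betw[OF bij, where g = "\<lambda>a. \<Sum>b<N. W N (rk N x a) (rk N x b) * cst p (x a) (x b)"])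
  also have "\<dots> = (\<Sum>a<N. \<Sum>b\<in>{..<N}-{a}. gab p N a b x)"
  proof (rule sum.cong[OF refl])
    fix a assume a: "a \<in> {..<N}"
    have "(\<Sum>b<N. W N (rk N x a) (rk N x b) * cst p (x a) (x b))
        = W N (rk N x a) (rk N x a) * cst p (x a) (x a) + (\<Sum>b\<in>{..<N}-{a}. W N (rk N x a) (rk N x b) * cst p (x a) (x b))"
      using a by (subst sum.remove[of _ a]) auto
    also have "\<dots> = (\<Sum>b\<in>{..<N}-{a}. gab p N a b x)"
    proof -
      have "W N (rk N x a) (rk N x a) = 0" by (simp add: W_def)
      moreover have "(\<Sum>b\<in>{..<N}-{a}. W N (rk N x a) (rk N x b) * cst p (x a) (x b)) = (\<Sum>b\<in>{..<N}-{a}. gab p N a b x)"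
        using a by (intro sum.cong refl pair_eq[OF inj]) auto
      ultimately show ?thesis by simp
    qed
    finally show "(\<Sum>b<N. W N (rk N x a) (rk N x b) * cst p (x a) (x b)) = (\<Sum>b\<in>{..<N}-{a}. gab p N a b x)" .
  qed
  finally show ?thesis unfolding z_def .
qed

lemma beta_nn:
  fixes a b :: real assumes "a > 0" "b > 0"
  shows "(\<integral>\<^sup>+ x. ennreal (if 0 \<le> x \<and> x \<le> 1 then x powr (a-1) * (1-x) powr (b-1) else 0) \<partial>lborel) = ennreal (Beta a b)"
proof -
  have "(\<integral>\<^sup>+ x. ennreal (indicator {0..1} x * (x powr (a-1) * (1-x) powr (b-1))) \<partial>lborel) = ennreal (Beta a b)"
    by (rule nn_integral_has_integral_lebesgue) (use has_integral_Beta_real[OF assms] in auto)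
  moreover have "(\<integral>\<^sup>+ x. ennreal (if 0 \<le> x \<and> x \<le> 1 then x powr (a-1) * (1-x) powr (b-1) else 0) \<partial>lborel)
     = (\<integral>\<^sup>+ x. ennreal (indicator {0..1} x * (x powr (a-1) * (1-x) powr (b-1))) \<partial>lborel)"
    by (intro nn_integral_cong) (simp add: indicator_def)
  ultimately show ?thesis by simp
qed

lemma powr_nn:
  fixes a c :: real assumes "a > -1" "c \<ge> 0"
  shows "(\<integral>\<^sup>+ x. ennreal (if 0 \<le> x \<and> x \<le> c then x powr a else 0) \<partial>lborel) = ennreal (c powr (a+1) / (a+1))"
proof -
  have "(\<integral>\<^sup>+ x. ennreal (indicator {0..c} x * x powr a) \<partial>lborel) = ennreal (c powr (a+1) / (a+1))"
    by (rule nn_integral_has_integral_lebesgue) (use has_integral_powr_from_0[OF assms] in auto)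
  moreover have "(\<integral>\<^sup>+ x. ennreal (if 0 \<le> x \<and> x \<le> c then x powr a else 0) \<partial>lborel)
     = (\<integral>\<^sup>+ x. ennreal (indicator {0..c} x * x powr a) \<partial>lborel)"
    by (intro nn_integral_cong) (simp add: indicator_def)
  ultimately show ?thesis by simp
qed

lemma trans_nn:
  fixes f :: "real \<Rightarrow> ennreal" assumes [measurable]: "f \<in> borel_measurable borel"
  shows "(\<integral>\<^sup>+ x. f x \<partial>lborel) = (\<integral>\<^sup>+ x. f (s + x) \<partial>lborel)"
  using nn_integral_real_affine[OF assms, of 1 s] by simp

lemma refl_nn:
  fixes f :: "real \<Rightarrow> ennreal" assumes [measurable]: "f \<in> borel_measurable borel"
  shows "(\<integral>\<^sup>+ x. f x \<partial>lborel) = (\<integral>\<^sup>+ x. f (s - x) \<partial>lborel)"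
  using nn_integral_real_affine[OF assms, of "-1" s] by simp

lemma KA:
  fixes p :: real and n :: nat assumes p: "p \<ge> 1" and n: "n \<ge> 1"
  shows "(\<integral>\<^sup>+ s. \<integral>\<^sup>+ t. ennreal (if 0 \<le> s \<and> s < t \<and> t \<le> 1 then (t-s) powr (p+1) * (1-(t-s))^(n-1) else 0) \<partial>lborel \<partial>lborel)
     = ennreal (Beta (p+2) (real n + 1))"
proof -
  define G where "G s d = ennreal (if 0 \<le> s \<and> 0 < d \<and> s + d \<le> 1 then d powr (p+1) * (1-d)^(n-1) else 0)" for s d :: real
  have Gm[measurable]: "case_prod G \<in> borel_measurable (lborel \<Otimes>\<^sub>M lborel)"
    unfolding G_def by measurable
  have step1: "(\<integral>\<^sup>+ t. ennreal (if 0 \<le> s \<and> s < t \<and> t \<le> 1 then (t-s) powr (p+1) * (1-(t-s))^(n-1) else 0) \<partial>lborel)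
      = (\<integral>\<^sup>+ d. G s d \<partial>lborel)" for s
  proof -
    have m: "(\<lambda>t. ennreal (if 0 \<le> s \<and> s < t \<and> t \<le> 1 then (t-s) powr (p+1) * (1-(t-s))^(n-1) else 0)) \<in> borel_measurable borel"
      by measurable
    show ?thesis unfolding trans_nn[OF m, of s] G_def by (intro nn_integral_cong) simp
  qed
  have step2: "(\<integral>\<^sup>+ s. G s d \<partial>lborel) = ennreal (if 0 < d \<and> d \<le> 1 then d powr (p+1) * (1-d)^(n-1) * (1-d) else 0)" for d
  proof (cases "0 < d \<and> d \<le> 1")
    case True
    have "(\<integral>\<^sup>+ s. G s d \<partial>lborel) = (\<integral>\<^sup>+ s. ennreal (d powr (p+1) * (1-d)^(n-1)) * indicator {0..1-d} s \<partial>lborel)"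
      using True by (intro nn_integral_cong) (auto simp: G_def indicator_def)
    also have "\<dots> = ennreal (d powr (p+1) * (1-d)^(n-1)) * ennreal (1-d)"
      using True by (subst nn_integral_cmult_indicator) auto
    finally show ?thesis using True by (simp add: ennreal_mult[symmetric])
  next
    case False
    hence "\<And>s. G s d = 0" by (auto simp: G_def)
    hence "(\<integral>\<^sup>+ s. G s d \<partial>lborel) = 0" by simp
    moreover have "(if 0 < d \<and> d \<le> 1 then d powr (p+1) * (1-d)^(n-1) * (1-d) else 0) = 0"
      by (rule if_not_P[OF False])
    ultimately show ?thesis by simp
  qed
  have "(\<integral>\<^sup>+ s. \<integral>\<^sup>+ t. ennreal (if 0 \<le> s \<and> s < t \<and> t \<le> 1 then (t-s) powr (p+1) * (1-(t-s))^(n-1) else 0) \<partial>lborel \<partial>lborel)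
      = (\<integral>\<^sup>+ s. \<integral>\<^sup>+ d. G s d \<partial>lborel \<partial>lborel)" by (simp add: step1)
  also have "\<dots> = (\<integral>\<^sup>+ d. \<integral>\<^sup>+ s. G s d \<partial>lborel \<partial>lborel)"
    by (rule lborel_pair.Fubini'[symmetric]) measurable
  also have "\<dots> = (\<integral>\<^sup>+ d. ennreal (if 0 \<le> d \<and> d \<le> 1 then d powr (p+2-1) * (1-d) powr (real n+1-1) else 0) \<partial>lborel)"
  proof (intro nn_integral_cong, unfold step2)
    fix d :: real
    show "ennreal (if 0 < d \<and> d \<le> 1 then d powr (p+1) * (1-d)^(n-1) * (1-d) else 0)
        = ennreal (if 0 \<le> d \<and> d \<le> 1 then d powr (p+2-1) * (1-d) powr (real n+1-1) else 0)"
    proof (cases "0 < d \<and> d < 1")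
      case True
      have "(1-d)^(n-1) * (1-d) = (1-d)^n" using n by (cases n) auto
      also have "\<dots> = (1-d) powr (real n)" using True by (simp add: powr_realpow)
      moreover have "p + 2 - 1 = p + 1" "real n + 1 - 1 = real n" by simp_all
      ultimately have e: "d powr (p+1) * (1-d)^(n-1) * (1-d) = d powr (p+2-1) * (1-d) powr (real n+1-1)"
        by (simp only: mult.assoc)
      show ?thesis using True by (simp only: e if_True) (simp add: less_imp_le)
    next
      case False
      hence "d \<le> 0 \<or> d = 1 \<or> d > 1" by linarith
      moreover have "d = 1 \<Longrightarrow> ?thesis" using n by simp
      moreover have "d \<le> 0 \<Longrightarrow> ?thesis" by (cases "d = 0") auto
      moreover have "d > 1 \<Longrightarrow> ?thesis" by simp
      ultimately show ?thesis by blast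
    qed
  qed
  also have "\<dots> = ennreal (Beta (p+2) (real n + 1))"
    by (rule beta_nn) (use p in auto)
  finally show ?thesis .
qed

lemma Beta_pos: "a > 0 \<Longrightarrow> b > 0 \<Longrightarrow> Beta a b > (0::real)"
  by (simp add: Beta_def Gamma_real_pos)

lemma KB:
  fixes p :: real and n :: nat assumes p: "p \<ge> 1" and n: "n \<ge> 1"
  shows "(\<integral>\<^sup>+ s. \<integral>\<^sup>+ t. ennreal (if 0 \<le> s \<and> s < t \<and> t \<le> 1 then (t-s) powr p * (1-t)^n else 0) \<partial>lborel \<partial>lborel)
     = ennreal (Beta (p+2) (real n + 1) / (p+1))"
proof -
  define F where "F s t = ennreal (if 0 \<le> s \<and> s < t \<and> t \<le> 1 then (t-s) powr p * (1-t)^n else 0)" for s t :: real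
  have Fm[measurable]: "case_prod F \<in> borel_measurable (lborel \<Otimes>\<^sub>M lborel)"
    unfolding F_def by measurable
  have inner: "(\<integral>\<^sup>+ s. F s t \<partial>lborel) = ennreal (if 0 \<le> t \<and> t \<le> 1 then t powr (p+2-1) * (1-t) powr (real n+1-1) / (p+1) else 0)" for t
  proof -
    have m: "(\<lambda>s. F s t) \<in> borel_measurable borel" unfolding F_def by measurable
    have "(\<integral>\<^sup>+ s. F s t \<partial>lborel) = (\<integral>\<^sup>+ u. F (t - u) t \<partial>lborel)" by (rule refl_nn[OF m])
    also have "\<dots> = ennreal (if 0 \<le> t \<and> t \<le> 1 then (1-t)^n * (t powr (p+1) / (p+1)) else 0)"
    proof (cases "0 \<le> t \<and> t \<le> 1")
      case True
      have "(\<integral>\<^sup>+ u. F (t - u) t \<partial>lborel) = (\<integral>\<^sup>+ u. ennreal ((1-t)^n) * ennreal (if 0 \<le> u \<and> u \<le> t then u powr p else 0) \<partial>lborel)"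
      proof (intro nn_integral_cong)
        fix u :: real
        show "F (t - u) t = ennreal ((1-t)^n) * ennreal (if 0 \<le> u \<and> u \<le> t then u powr p else 0)"
          using True by (cases "u = 0") (auto simp: F_def ennreal_mult[symmetric])
      qed
      also have "\<dots> = ennreal ((1-t)^n) * ennreal (t powr (p+1) / (p+1))"
        by (subst nn_integral_cmult) (use powr_nn[of p t] p True in auto)
      finally show ?thesis using True p by (simp add: ennreal_mult[symmetric])
    next
      case False
      hence "\<And>u. F (t - u) t = 0" by (auto simp: F_def)
      hence "(\<integral>\<^sup>+ u. F (t - u) t \<partial>lborel) = 0" by simp
      moreover have "(if 0 \<le> t \<and> t \<le> 1 then (1-t)^n * (t powr (p+1) / (p+1)) else 0) = 0"
        by (rule if_not_P[OF False])
      ultimately show ?thesis by simp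
    qed
    also have "\<dots> = ennreal (if 0 \<le> t \<and> t \<le> 1 then t powr (p+2-1) * (1-t) powr (real n+1-1) / (p+1) else 0)"
    proof (cases "0 \<le> t \<and> t < 1")
      case True
      have "(1-t)^n = (1-t) powr (real n)" using True by (simp add: powr_realpow)
      moreover have "p + 2 - 1 = p + 1" "real n + 1 - 1 = real n" by simp_all
      ultimately have e: "(1-t)^n * (t powr (p+1) / (p+1)) = t powr (p+2-1) * (1-t) powr (real n+1-1) / (p+1)"
        by (simp add: add.commute)
      show ?thesis using True by (simp only: e)
    next
      case False
      hence "t < 0 \<or> t = 1 \<or> t > 1" by linarith
      moreover have "t = 1 \<Longrightarrow> ?thesis" using n by (simp add: power_0_left)
      moreover have "t < 0 \<Longrightarrow> ?thesis" by simp
      moreover have "t > 1 \<Longrightarrow> ?thesis" by simp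
      ultimately show ?thesis by blast
    qed
    finally show ?thesis .
  qed
  have "(\<integral>\<^sup>+ s. \<integral>\<^sup>+ t. ennreal (if 0 \<le> s \<and> s < t \<and> t \<le> 1 then (t-s) powr p * (1-t)^n else 0) \<partial>lborel \<partial>lborel)
      = (\<integral>\<^sup>+ s. \<integral>\<^sup>+ t. F s t \<partial>lborel \<partial>lborel)" by (simp add: F_def)
  also have "\<dots> = (\<integral>\<^sup>+ t. \<integral>\<^sup>+ s. F s t \<partial>lborel \<partial>lborel)"
    by (rule lborel_pair.Fubini'[symmetric]) measurable
  also have "\<dots> = (\<integral>\<^sup>+ t. ennreal (if 0 \<le> t \<and> t \<le> 1 then t powr (p+2-1) * (1-t) powr (real n+1-1) else 0) * ennreal (1 / (p+1)) \<partial>lborel)"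
    unfolding inner using p by (intro nn_integral_cong) (simp add: ennreal_mult[symmetric])
  also have "\<dots> = ennreal (Beta (p+2) (real n + 1)) * ennreal (1 / (p+1))"
    by (subst nn_integral_multc) (measurable, use beta_nn[of "p+2" "real n + 1"] p in simp)
  also have "\<dots> = ennreal (Beta (p+2) (real n + 1) / (p+1))"
    using p Beta_pos[of "p+2" "real n + 1"] by (subst ennreal_mult[symmetric]) (simp_all add: divide_inverse)
  finally show ?thesis .
qed

lemma KC:
  fixes p :: real and n :: nat assumes p: "p \<ge> 1" and n: "n \<ge> 1"
  shows "(\<integral>\<^sup>+ s. \<integral>\<^sup>+ t. ennreal (if 0 \<le> s \<and> s < t \<and> t \<le> 1 then (t-s) powr p * s^n else 0) \<partial>lborel \<partial>lborel)
     = ennreal (Beta (p+2) (real n + 1) / (p+1))"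
proof -
  define F where "F s t = ennreal (if 0 \<le> s \<and> s < t \<and> t \<le> 1 then (t-s) powr p * s^n else 0)" for s t :: real
  have inner: "(\<integral>\<^sup>+ t. F s t \<partial>lborel) = ennreal (if 0 \<le> s \<and> s \<le> 1 then s powr (real n+1-1) * (1-s) powr (p+2-1) / (p+1) else 0)" for s
  proof -
    have m: "(\<lambda>t. F s t) \<in> borel_measurable borel" unfolding F_def by measurable
    have "(\<integral>\<^sup>+ t. F s t \<partial>lborel) = (\<integral>\<^sup>+ u. F s (s + u) \<partial>lborel)" by (rule trans_nn[OF m])
    also have "\<dots> = ennreal (if 0 \<le> s \<and> s \<le> 1 then s^n * ((1-s) powr (p+1) / (p+1)) else 0)"
    proof (cases "0 \<le> s \<and> s \<le> 1")
      case True
      have "(\<integral>\<^sup>+ u. F s (s + u) \<partial>lborel) = (\<integral>\<^sup>+ u. ennreal (s^n) * ennreal (if 0 \<le> u \<and> u \<le> 1 - s then u powr p else 0) \<partial>lborel)"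
      proof (intro nn_integral_cong)
        fix u :: real
        show "F s (s + u) = ennreal (s^n) * ennreal (if 0 \<le> u \<and> u \<le> 1 - s then u powr p else 0)"
          using True by (cases "u = 0") (auto simp: F_def ennreal_mult[symmetric] mult.commute)
      qed
      also have "\<dots> = ennreal (s^n) * ennreal ((1-s) powr (p+1) / (p+1))"
        by (subst nn_integral_cmult) (use powr_nn[of p "1-s"] p True in auto)
      finally show ?thesis using True p by (simp add: ennreal_mult[symmetric])
    next
      case False
      hence "\<And>u. F s (s + u) = 0" by (auto simp: F_def)
      hence "(\<integral>\<^sup>+ u. F s (s + u) \<partial>lborel) = 0" by simp
      moreover have "(if 0 \<le> s \<and> s \<le> 1 then s^n * ((1-s) powr (p+1) / (p+1)) else 0) = 0"
        by (rule if_not_P[OF False])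
      ultimately show ?thesis by simp
    qed
    also have "\<dots> = ennreal (if 0 \<le> s \<and> s \<le> 1 then s powr (real n+1-1) * (1-s) powr (p+2-1) / (p+1) else 0)"
    proof (cases "0 < s \<and> s \<le> 1")
      case True
      have "s^n = s powr (real n)" using True by (simp add: powr_realpow)
      moreover have "p + 2 - 1 = p + 1" "real n + 1 - 1 = real n" by simp_all
      ultimately have e: "s^n * ((1-s) powr (p+1) / (p+1)) = s powr (real n+1-1) * (1-s) powr (p+2-1) / (p+1)"
        by (simp add: add.commute)
      show ?thesis using True by (simp only: e)
    next
      case False
      hence "s < 0 \<or> s = 0 \<or> s > 1" by linarith
      moreover have "s = 0 \<Longrightarrow> ?thesis" using n by (simp add: power_0_left)
      moreover have "s < 0 \<Longrightarrow> ?thesis" by simp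
      moreover have "s > 1 \<Longrightarrow> ?thesis" by simp
      ultimately show ?thesis by blast
    qed
    finally show ?thesis .
  qed
  have "(\<integral>\<^sup>+ s. \<integral>\<^sup>+ t. ennreal (if 0 \<le> s \<and> s < t \<and> t \<le> 1 then (t-s) powr p * s^n else 0) \<partial>lborel \<partial>lborel)
      = (\<integral>\<^sup>+ s. \<integral>\<^sup>+ t. F s t \<partial>lborel \<partial>lborel)" by (simp add: F_def)
  also have "\<dots> = (\<integral>\<^sup>+ s. ennreal (if 0 \<le> s \<and> s \<le> 1 then s powr (real n+1-1) * (1-s) powr (p+2-1) else 0) * ennreal (1 / (p+1)) \<partial>lborel)"
    unfolding inner using p by (intro nn_integral_cong) (simp add: ennreal_mult[symmetric])
  also have "\<dots> = ennreal (Beta (real n + 1) (p+2)) * ennreal (1 / (p+1))"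
    by (subst nn_integral_multc) (measurable, use beta_nn[of "real n + 1" "p+2"] p in simp)
  also have "\<dots> = ennreal (Beta (p+2) (real n + 1) / (p+1))"
    using p Beta_pos[of "p+2" "real n + 1"] by (subst ennreal_mult[symmetric]) (simp_all add: divide_inverse Beta_def mult.commute add.commute)
  finally show ?thesis .
qed

lemma qA: "0 \<le> s \<Longrightarrow> s < t \<Longrightarrow> t \<le> 1 \<Longrightarrow> measure UM {s<..<t} = t - s"
  by (simp add: Int_absorb1 subset_eq)

lemma qB: "0 \<le> t \<Longrightarrow> t \<le> 1 \<Longrightarrow> measure UM {..<t} = t"
proof -
  assume "0 \<le> t" "t \<le> 1"
  hence "{0..1} \<inter> {..<t} = {0..<t}" by auto
  thus ?thesis using \<open>0 \<le> t\<close> by simp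
qed

lemma qC: "0 \<le> s \<Longrightarrow> s \<le> 1 \<Longrightarrow> measure UM {s<..} = 1 - s"
proof -
  assume "0 \<le> s" "s \<le> 1"
  hence "{0..1} \<inter> {s<..} = {s<..1}" by auto
  thus ?thesis using \<open>s \<le> 1\<close> by simp
qed

lemma cnt_Ioo: "cnt {u<..<v} J x = (\<Sum>c\<in>J. if u < x c \<and> x c < v then 1 else 0)"
  unfolding cnt_def by (intro sum.cong) (auto simp: indicator_def)
lemma cnt_lt: "cnt {..<v} J x = (\<Sum>c\<in>J. if x c < v then 1 else 0)"
  unfolding cnt_def by (intro sum.cong) (auto simp: indicator_def)
lemma cnt_gt: "cnt {u<..} J x = (\<Sum>c\<in>J. if u < x c then 1 else 0)"
  unfolding cnt_def by (intro sum.cong) (auto simp: indicator_def)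

lemma of_bool_eq_meas[measurable (raw)]:
  "g \<in> borel_measurable M \<Longrightarrow> (\<lambda>x. of_bool (g x = (k::real)) :: real) \<in> borel_measurable M"
proof -
  assume g: "g \<in> borel_measurable M"
  have "(\<lambda>y::real. of_bool (y = k) :: real) \<in> borel_measurable borel" by measurable
  from measurable_compose[OF g this] show ?thesis by simp
qed

lemma gab_meas[measurable]:
  assumes "a < N" "b < N"
  shows "(\<lambda>x. ennreal (gab p N a b x)) \<in> borel_measurable (PiM {..<N} (\<lambda>_. UM))"
proof -
  have [measurable]: "a \<in> {..<N}" "b \<in> {..<N}" using assms by auto
  have [measurable]: "(\<lambda>x. \<Sum>c\<in>{..<N} - {a, b}. if x a < x c \<and> x c < x b then 1 else 0 :: real) \<in> borel_measurable (PiM {..<N} (\<lambda>_. UM))"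
  proof (rule borel_measurable_sum)
    fix c assume "c \<in> {..<N} - {a, b}"
    hence [measurable]: "c \<in> {..<N}" by auto
    show "(\<lambda>x. if x a < x c \<and> x c < x b then 1 else 0 :: real) \<in> borel_measurable (PiM {..<N} (\<lambda>_. UM))"
      by measurable
  qed
  have [measurable]: "(\<lambda>x. \<Sum>c\<in>{..<N} - {a, b}. if x c < x b then 1 else 0 :: real) \<in> borel_measurable (PiM {..<N} (\<lambda>_. UM))"
  proof (rule borel_measurable_sum)
    fix c assume "c \<in> {..<N} - {a, b}"
    hence [measurable]: "c \<in> {..<N}" by auto
    show "(\<lambda>x. if x c < x b then 1 else 0 :: real) \<in> borel_measurable (PiM {..<N} (\<lambda>_. UM))"
      by measurable
  qed
  have [measurable]: "(\<lambda>x. \<Sum>c\<in>{..<N} - {a, b}. if x a < x c then 1 else 0 :: real) \<in> borel_measurable (PiM {..<N} (\<lambda>_. UM))"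
  proof (rule borel_measurable_sum)
    fix c assume "c \<in> {..<N} - {a, b}"
    hence [measurable]: "c \<in> {..<N}" by auto
    show "(\<lambda>x. if x a < x c then 1 else 0 :: real) \<in> borel_measurable (PiM {..<N} (\<lambda>_. UM))"
      by measurable
  qed
  show ?thesis unfolding gab_def cnt_Ioo cnt_lt cnt_gt by measurable
qed

definition Phi :: "real \<Rightarrow> nat \<Rightarrow> real \<Rightarrow> real \<Rightarrow> real" where
  "Phi p n s t = (if s < t then (t-s) powr p else 0) * (real n * (t-s) * (1-(t-s))^(n-1) + (1-t)^n + s^n)"

lemma Phi_meas[measurable]: "(\<lambda>(s,t). Phi p n s t) \<in> borel_measurable (borel \<Otimes>\<^sub>M borel)"
  unfolding Phi_def by measurable

lemma inner_J:
  assumes fJ: "finite J"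
  shows "(\<integral>\<^sup>+ w. ennreal ((if s < t then (t-s) powr p else 0) *
      (of_bool (cnt {s<..<t} J w = 1) + of_bool (cnt {..<t} J w = 0) + of_bool (cnt {s<..} J w = 0))) \<partial>PiM J (\<lambda>_. UM))
    = ennreal (if s < t then (t-s) powr p else 0) *
      (ennreal (card J * measure UM {s<..<t} * (1 - measure UM {s<..<t}) ^ (card J - 1))
       + ennreal ((1 - measure UM {..<t}) ^ card J) + ennreal ((1 - measure UM {s<..}) ^ card J))"
proof -
  have e: "ennreal ((if s < t then (t-s) powr p else 0) *
      (of_bool (cnt {s<..<t} J w = 1) + of_bool (cnt {..<t} J w = 0) + of_bool (cnt {s<..} J w = 0)))
    = ennreal (if s < t then (t-s) powr p else 0) *
      (ennreal (if cnt {s<..<t} J w = 1 then 1 else 0) + ennreal (if cnt {..<t} J w = 0 then 1 else 0)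
       + ennreal (if cnt {s<..} J w = 0 then 1 else 0))" for w
    by (simp add: ennreal_mult ennreal_plus[symmetric] del: ennreal_plus)
  have m1: "(\<lambda>w. ennreal (if cnt S J w = c then 1 else 0)) \<in> borel_measurable (PiM J (\<lambda>_. UM))"
    if "S \<in> sets borel" for S c using cnt_ind_meas[OF fJ that] by simp
  show ?thesis
    unfolding e
    apply (subst nn_integral_cmult)
     apply (intro borel_measurable_add m1; simp)
    apply (subst nn_integral_add, (intro borel_measurable_add m1; simp)+)+
    using binom[OF fJ, of "{s<..<t}"] binom[OF fJ, of "{..<t}"] binom[OF fJ, of "{s<..}"]
    by simp
qed

lemma Phi_eq:
  assumes "0 \<le> s" "s \<le> 1" "0 \<le> t" "t \<le> 1"
  shows "ennreal (if s < t then (t-s) powr p else 0) *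
      (ennreal (n * measure UM {s<..<t} * (1 - measure UM {s<..<t}) ^ (n - 1))
       + ennreal ((1 - measure UM {..<t}) ^ n) + ennreal ((1 - measure UM {s<..}) ^ n))
     = ennreal (Phi p n s t)"
proof (cases "s < t")
  case True
  have nn: "0 \<le> real n * (t-s) * (1-(t-s))^(n-1)" "0 \<le> (1-t)^n" "0 \<le> s^n" using assms True by auto
  have q: "measure UM {s<..<t} = t - s" "measure UM {..<t} = t" "measure UM {s<..} = 1 - s"
    using assms True by (simp_all only: qA qB qC)
  show ?thesis unfolding q using True assms nn
    by (simp add: Phi_def ennreal_mult[symmetric] ennreal_plus[symmetric] del: ennreal_plus)
next
  case False thus ?thesis by (simp add: Phi_def)
qed

lemma gab_integral_pi2:
  assumes a: "a < N" and b: "b < N" and ab: "a \<noteq> b"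
  shows "(\<integral>\<^sup>+ x. ennreal (gab p N a b x) \<partial>PiM {..<N} (\<lambda>_. UM))
     = (\<integral>\<^sup>+ y. ennreal (Phi p (N - 2) (y a) (y b)) \<partial>PiM {a,b} (\<lambda>_. UM))"
proof -
  define J where "J = {..<N} - {a,b}"
  have IJ: "{..<N} = {a,b} \<union> J" using a b unfolding J_def by auto
  have disj: "{a,b} \<inter> J = {}" unfolding J_def by auto
  have fJ: "finite J" unfolding J_def by simp
  have cJ: "card J = N - 2" unfolding J_def using a b ab by (simp add: card_Diff_subset)
  have gm: "(\<lambda>x. ennreal (gab p N a b x)) \<in> borel_measurable (PiM ({a,b} \<union> J) (\<lambda>_. UM))"
    using gab_meas[OF a b, of p] IJ by simp
  have "(\<integral>\<^sup>+ x. ennreal (gab p N a b x) \<partial>PiM {..<N} (\<lambda>_. UM))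
      = (\<integral>\<^sup>+ x. ennreal (gab p N a b x) \<partial>PiM ({a,b} \<union> J) (\<lambda>_. UM))" using IJ by simp
  also have "\<dots> = (\<integral>\<^sup>+ y. \<integral>\<^sup>+ w. ennreal (gab p N a b (merge {a,b} J (y, w))) \<partial>PiM J (\<lambda>_. UM) \<partial>PiM {a,b} (\<lambda>_. UM))"
    by (rule UMP.product_nn_integral_fold[OF disj _ fJ gm]) simp
  also have "\<dots> = (\<integral>\<^sup>+ y. ennreal (Phi p (N - 2) (y a) (y b)) \<partial>PiM {a,b} (\<lambda>_. UM))"
  proof (rule nn_integral_cong_AE)
    have ae1: "AE y in PiM {a,b} (\<lambda>_. UM). y a \<in> {0..1}"
      by (rule AE_PiM_component) (auto simp: UM_prob intro!: AE_uniform_measureI)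
    have ae2: "AE y in PiM {a,b} (\<lambda>_. UM). y b \<in> {0..1}"
      by (rule AE_PiM_component) (auto simp: UM_prob intro!: AE_uniform_measureI)
    show "AE y in PiM {a,b} (\<lambda>_. UM). (\<integral>\<^sup>+ w. ennreal (gab p N a b (merge {a,b} J (y, w))) \<partial>PiM J (\<lambda>_. UM))
        = ennreal (Phi p (N - 2) (y a) (y b))"
      using ae1 ae2
    proof eventually_elim
      case (elim y)
      have mg: "merge {a,b} J (y, w) a = y a" "merge {a,b} J (y, w) b = y b" for w
        using disj by auto
      have cn: "cnt S J (merge {a,b} J (y, w)) = cnt S J w" for S w
        unfolding cnt_def using disj by (intro sum.cong) auto
      have "(\<integral>\<^sup>+ w. ennreal (gab p N a b (merge {a,b} J (y, w))) \<partial>PiM J (\<lambda>_. UM))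
          = (\<integral>\<^sup>+ w. ennreal ((if y a < y b then (y b - y a) powr p else 0) *
            (of_bool (cnt {y a<..<y b} J w = 1) + of_bool (cnt {..<y b} J w = 0) + of_bool (cnt {y a<..} J w = 0))) \<partial>PiM J (\<lambda>_. UM))"
        unfolding gab_def J_def[symmetric] mg cn ..
      also have "\<dots> = ennreal (Phi p (N - 2) (y a) (y b))"
        unfolding inner_J[OF fJ] cJ using elim by (intro Phi_eq) auto
      finally show ?case .
    qed
  qed
  finally show ?thesis .
qed

lemma pi2_to_UM:
  fixes a b :: nat
  assumes ab: "a \<noteq> b"
  shows "(\<integral>\<^sup>+ y. ennreal (Phi p n (y a) (y b)) \<partial>PiM {a,b} (\<lambda>_. UM))
     = (\<integral>\<^sup>+ s. \<integral>\<^sup>+ t. ennreal (Phi p n s t) \<partial>UM \<partial>UM)"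
proof -
  have d: "{a} \<inter> {b} = {}" using ab by auto
  have fm: "(\<lambda>y. ennreal (Phi p n (y a) (y b))) \<in> borel_measurable (PiM ({a} \<union> {b}) (\<lambda>_. UM))"
  proof -
    have [measurable]: "a \<in> {a} \<union> {b}" "b \<in> {a} \<union> {b}" by auto
    have "(\<lambda>y. (y a, y b)) \<in> PiM ({a} \<union> {b}) (\<lambda>_. UM) \<rightarrow>\<^sub>M borel \<Otimes>\<^sub>M borel" by measurable
    from measurable_compose[OF this Phi_meas] show ?thesis by simp
  qed
  have "(\<integral>\<^sup>+ y. ennreal (Phi p n (y a) (y b)) \<partial>PiM {a,b} (\<lambda>_. UM))
      = (\<integral>\<^sup>+ y. ennreal (Phi p n (y a) (y b)) \<partial>PiM ({a} \<union> {b}) (\<lambda>_. UM))"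
    by (simp add: insert_commute)
  also have "\<dots> = (\<integral>\<^sup>+ y. \<integral>\<^sup>+ w. ennreal (Phi p n (merge {a} {b} (y, w) a) (merge {a} {b} (y, w) b)) \<partial>PiM {b} (\<lambda>_. UM) \<partial>PiM {a} (\<lambda>_. UM))"
    by (rule UMP.product_nn_integral_fold) (use d fm in simp_all)
  also have "\<dots> = (\<integral>\<^sup>+ y. \<integral>\<^sup>+ w. ennreal (Phi p n (y a) (w b)) \<partial>PiM {b} (\<lambda>_. UM) \<partial>PiM {a} (\<lambda>_. UM))"
    using d by simp
  also have "\<dots> = (\<integral>\<^sup>+ y. \<integral>\<^sup>+ t. ennreal (Phi p n (y a) t) \<partial>UM \<partial>PiM {a} (\<lambda>_. UM))"
  proof (intro nn_integral_cong)
    fix y :: "nat \<Rightarrow> real"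
    have "(\<lambda>t. ennreal (Phi p n (y a) t)) \<in> borel_measurable UM"
      unfolding Phi_def by measurable
    from UMP.product_nn_integral_singleton[OF this, of b] show "(\<integral>\<^sup>+ w. ennreal (Phi p n (y a) (w b)) \<partial>PiM {b} (\<lambda>_. UM)) = (\<integral>\<^sup>+ t. ennreal (Phi p n (y a) t) \<partial>UM)" .
  qed
  also have "\<dots> = (\<integral>\<^sup>+ s. \<integral>\<^sup>+ t. ennreal (Phi p n s t) \<partial>UM \<partial>UM)"
  proof -
    have "(\<lambda>s. \<integral>\<^sup>+ t. ennreal (Phi p n s t) \<partial>UM) \<in> borel_measurable UM"
    proof (rule sigma_finite_measure.borel_measurable_nn_integral[OF prob_space_imp_sigma_finite[OF UM_prob]])
      show "case_prod (\<lambda>s t. ennreal (Phi p n s t)) \<in> borel_measurable (UM \<Otimes>\<^sub>M UM)"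
        unfolding Phi_def by measurable
    qed
    from UMP.product_nn_integral_singleton[OF this, of a] show ?thesis .
  qed
  finally show ?thesis .
qed

lemma UM_nn: assumes "f \<in> borel_measurable borel" shows "(\<integral>\<^sup>+ x. f x \<partial>UM) = (\<integral>\<^sup>+ x. f x * indicator {0..1} x \<partial>lborel)"
proof -
  have m: "f \<in> borel_measurable lborel" using assms by simp
  have "(\<integral>\<^sup>+ x. f x \<partial>UM) = (\<integral>\<^sup>+ x. f x * indicator {0..1} x \<partial>lborel) / emeasure lborel {0..1::real}"
    by (rule nn_integral_uniform_measure[OF m]) simp
  also have "emeasure lborel {0..1::real} = 1" by simp
  finally show ?thesis by (simp add: divide_ennreal_def)
qed

lemma UM2_to_K:
  fixes p :: real and n :: nat assumes p: "p \<ge> 1" and n: "n \<ge> 1"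
  shows "(\<integral>\<^sup>+ s. \<integral>\<^sup>+ t. ennreal (Phi p n s t) \<partial>UM \<partial>UM)
    = ennreal (real n * Beta (p+2) (real n + 1) + 2 * (Beta (p+2) (real n + 1) / (p+1)))"
proof -
  define A where "A s t = ennreal (if 0 \<le> s \<and> s < t \<and> t \<le> 1 then (t-s) powr (p+1) * (1-(t-s))^(n-1) else 0)" for s t :: real
  define B where "B s t = ennreal (if 0 \<le> s \<and> s < t \<and> t \<le> 1 then (t-s) powr p * (1-t)^n else 0)" for s t :: real
  define C where "C s t = ennreal (if 0 \<le> s \<and> s < t \<and> t \<le> 1 then (t-s) powr p * s^n else 0)" for s t :: real
  have [measurable]: "case_prod A \<in> borel_measurable (lborel \<Otimes>\<^sub>M lborel)"
     "case_prod B \<in> borel_measurable (lborel \<Otimes>\<^sub>M lborel)"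
     "case_prod C \<in> borel_measurable (lborel \<Otimes>\<^sub>M lborel)"
    unfolding A_def B_def C_def by measurable
  have [measurable]: "A s \<in> borel_measurable lborel" "B s \<in> borel_measurable lborel" "C s \<in> borel_measurable lborel" for s
    unfolding A_def B_def C_def by measurable
  have pw: "ennreal (Phi p n s t) * indicator {0..1} t * indicator {0..1} s = ennreal (real n) * A s t + B s t + C s t" for s t
  proof (cases "0 \<le> s \<and> s < t \<and> t \<le> 1")
    case True
    have ts: "t - s > 0" using True by simp
    have pa: "(t-s) powr p * (t-s) = (t-s) powr (p+1)" using ts by (simp add: powr_add)
    have "Phi p n s t = (t-s) powr p * (real n * (t-s) * (1-(t-s))^(n-1) + (1-t)^n + s^n)"
      using True unfolding Phi_def by simp
    also have "\<dots> = real n * (((t-s) powr p * (t-s)) * (1-(t-s))^(n-1)) + (t-s) powr p * (1-t)^n + (t-s) powr p * s^n"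
      by (simp only: distrib_left mult.assoc mult.left_commute)
    also have "\<dots> = real n * ((t-s) powr (p+1) * (1-(t-s))^(n-1)) + (t-s) powr p * (1-t)^n + (t-s) powr p * s^n"
      by (simp only: pa)
    finally have "Phi p n s t = real n * ((t-s) powr (p+1) * (1-(t-s))^(n-1)) + (t-s) powr p * (1-t)^n + (t-s) powr p * s^n" .
    moreover have nn: "0 \<le> (t-s) powr (p+1) * (1-(t-s))^(n-1)" "0 \<le> (t-s) powr p * (1-t)^n" "0 \<le> (t-s) powr p * s^n"
      using True by auto
    ultimately have "ennreal (Phi p n s t) = ennreal (real n) * ennreal ((t-s) powr (p+1) * (1-(t-s))^(n-1))
        + ennreal ((t-s) powr p * (1-t)^n) + ennreal ((t-s) powr p * s^n)"
      by (simp only: ennreal_plus[symmetric] ennreal_mult[symmetric] nn of_nat_0_le_iff add_nonneg_nonneg mult_nonneg_nonneg)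
    moreover have "indicator {0..1} t = (1::ennreal)" "indicator {0..1} s = (1::ennreal)" using True by auto
    ultimately show ?thesis using True unfolding A_def B_def C_def by simp
  next
    case False
    hence "s < 0 \<or> t \<le> s \<or> t > 1" by linarith
    moreover have "t \<le> s \<Longrightarrow> Phi p n s t = 0" by (simp add: Phi_def)
    ultimately have "ennreal (Phi p n s t) * indicator {0..1} t * indicator {0..1} s = 0"
      by (auto simp: indicator_def)
    moreover have "A s t = 0" "B s t = 0" "C s t = 0" using False unfolding A_def B_def C_def by auto
    ultimately show ?thesis by simp
  qed
  have ph[measurable]: "(\<lambda>t. ennreal (Phi p n s t)) \<in> borel_measurable borel" for s
    unfolding Phi_def by measurable
  have mA: "(\<lambda>s. \<integral>\<^sup>+ t. A s t \<partial>lborel) \<in> borel_measurable lborel"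
    using lborel.borel_measurable_nn_integral[of A lborel] by simp
  have mB: "(\<lambda>s. \<integral>\<^sup>+ t. B s t \<partial>lborel) \<in> borel_measurable lborel"
    using lborel.borel_measurable_nn_integral[of B lborel] by simp
  have mC: "(\<lambda>s. \<integral>\<^sup>+ t. C s t \<partial>lborel) \<in> borel_measurable lborel"
    using lborel.borel_measurable_nn_integral[of C lborel] by simp
  have "(\<integral>\<^sup>+ s. \<integral>\<^sup>+ t. ennreal (Phi p n s t) \<partial>UM \<partial>UM)
      = (\<integral>\<^sup>+ s. (\<integral>\<^sup>+ t. ennreal (Phi p n s t) * indicator {0..1} t \<partial>lborel) \<partial>UM)"
    by (intro nn_integral_cong) (rule UM_nn[OF ph])
  also have "\<dots> = (\<integral>\<^sup>+ s. (\<integral>\<^sup>+ t. ennreal (Phi p n s t) * indicator {0..1} t \<partial>lborel) * indicator {0..1} s \<partial>lborel)"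
  proof (rule UM_nn)
    have "(\<lambda>(s,t). ennreal (Phi p n s t) * indicator {0..1} t) \<in> borel_measurable (borel \<Otimes>\<^sub>M lborel)"
      unfolding Phi_def by measurable
    from lborel.borel_measurable_nn_integral[OF this]
    show "(\<lambda>s. \<integral>\<^sup>+ t. ennreal (Phi p n s t) * indicator {0..1} t \<partial>lborel) \<in> borel_measurable borel" .
  qed
  also have "\<dots> = (\<integral>\<^sup>+ s. (\<integral>\<^sup>+ t. ennreal (real n) * A s t + B s t + C s t \<partial>lborel) \<partial>lborel)"
  proof (intro nn_integral_cong)
    fix s :: real
    have m: "(\<lambda>t. ennreal (Phi p n s t) * indicator {0..1} t) \<in> borel_measurable lborel" by measurable
    show "(\<integral>\<^sup>+ t. ennreal (Phi p n s t) * indicator {0..1} t \<partial>lborel) * indicator {0..1} s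
        = (\<integral>\<^sup>+ t. ennreal (real n) * A s t + B s t + C s t \<partial>lborel)"
      by (subst nn_integral_multc[OF m, symmetric]) (simp only: pw)
  qed
  also have "\<dots> = (\<integral>\<^sup>+ s. ennreal (real n) * (\<integral>\<^sup>+ t. A s t \<partial>lborel) + (\<integral>\<^sup>+ t. B s t \<partial>lborel) + (\<integral>\<^sup>+ t. C s t \<partial>lborel) \<partial>lborel)"
  proof (intro nn_integral_cong)
    fix s :: real
    have "(\<integral>\<^sup>+ t. ennreal (real n) * A s t + B s t + C s t \<partial>lborel)
        = (\<integral>\<^sup>+ t. ennreal (real n) * A s t + B s t \<partial>lborel) + (\<integral>\<^sup>+ t. C s t \<partial>lborel)"
      by (rule nn_integral_add) measurable
    also have "(\<integral>\<^sup>+ t. ennreal (real n) * A s t + B s t \<partial>lborel)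
        = (\<integral>\<^sup>+ t. ennreal (real n) * A s t \<partial>lborel) + (\<integral>\<^sup>+ t. B s t \<partial>lborel)"
      by (rule nn_integral_add) measurable
    also have "(\<integral>\<^sup>+ t. ennreal (real n) * A s t \<partial>lborel) = ennreal (real n) * (\<integral>\<^sup>+ t. A s t \<partial>lborel)"
      by (rule nn_integral_cmult) measurable
    finally show "(\<integral>\<^sup>+ t. ennreal (real n) * A s t + B s t + C s t \<partial>lborel)
        = ennreal (real n) * (\<integral>\<^sup>+ t. A s t \<partial>lborel) + (\<integral>\<^sup>+ t. B s t \<partial>lborel) + (\<integral>\<^sup>+ t. C s t \<partial>lborel)" .
  qed
  also have "\<dots> = ennreal (real n) * (\<integral>\<^sup>+ s. \<integral>\<^sup>+ t. A s t \<partial>lborel \<partial>lborel) + (\<integral>\<^sup>+ s. \<integral>\<^sup>+ t. B s t \<partial>lborel \<partial>lborel) + (\<integral>\<^sup>+ s. \<integral>\<^sup>+ t. C s t \<partial>lborel \<partial>lborel)"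
  proof -
    have "(\<integral>\<^sup>+ s. ennreal (real n) * (\<integral>\<^sup>+ t. A s t \<partial>lborel) + (\<integral>\<^sup>+ t. B s t \<partial>lborel) + (\<integral>\<^sup>+ t. C s t \<partial>lborel) \<partial>lborel)
        = (\<integral>\<^sup>+ s. ennreal (real n) * (\<integral>\<^sup>+ t. A s t \<partial>lborel) + (\<integral>\<^sup>+ t. B s t \<partial>lborel) \<partial>lborel) + (\<integral>\<^sup>+ s. \<integral>\<^sup>+ t. C s t \<partial>lborel \<partial>lborel)"
      by (rule nn_integral_add) (use mA mB mC in measurable)
    also have "(\<integral>\<^sup>+ s. ennreal (real n) * (\<integral>\<^sup>+ t. A s t \<partial>lborel) + (\<integral>\<^sup>+ t. B s t \<partial>lborel) \<partial>lborel)
        = (\<integral>\<^sup>+ s. ennreal (real n) * (\<integral>\<^sup>+ t. A s t \<partial>lborel) \<partial>lborel) + (\<integral>\<^sup>+ s. \<integral>\<^sup>+ t. B s t \<partial>lborel \<partial>lborel)"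
      by (rule nn_integral_add) (use mA mB in measurable)
    also have "(\<integral>\<^sup>+ s. ennreal (real n) * (\<integral>\<^sup>+ t. A s t \<partial>lborel) \<partial>lborel) = ennreal (real n) * (\<integral>\<^sup>+ s. \<integral>\<^sup>+ t. A s t \<partial>lborel \<partial>lborel)"
      by (rule nn_integral_cmult[OF mA])
    finally show ?thesis .
  qed
  also have "\<dots> = ennreal (real n) * ennreal (Beta (p+2) (real n + 1)) + ennreal (Beta (p+2) (real n + 1) / (p+1)) + ennreal (Beta (p+2) (real n + 1) / (p+1))"
    unfolding A_def B_def C_def using KA[OF p n] KB[OF p n] KC[OF p n] by simp
  also have "\<dots> = ennreal (real n * Beta (p+2) (real n + 1) + 2 * (Beta (p+2) (real n + 1) / (p+1)))"
  proof -
    have "Beta (p+2) (real n + 1) > 0" by (rule Beta_pos) (use p in auto)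
    thus ?thesis using p by (simp add: ennreal_mult[symmetric] ennreal_plus[symmetric] del: ennreal_plus)
  qed
  finally show ?thesis .
qed

lemma UM_single: "emeasure UM {c} = 0"
proof -
  have "emeasure UM {c} = emeasure lborel ({0..1} \<inter> {c}) / emeasure lborel {0..1::real}"
    by (rule emeasure_uniform_measure) simp_all
  also have "emeasure lborel ({0..1} \<inter> {c}) = 0"
  proof -
    have "emeasure lborel ({0..1} \<inter> {c}) \<le> emeasure lborel {c::real}" by (rule emeasure_mono) auto
    moreover have "emeasure lborel {c::real} = 0" using emeasure_lborel_Icc[of c c] by simp
    ultimately show ?thesis by simp
  qed
  finally show ?thesis by simp
qed

lemma AE_neq:
  fixes a b N :: nat
  assumes a: "a < N" and b: "b < N" and ab: "a \<noteq> b"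
  shows "AE x in PiM {..<N} (\<lambda>_. UM). x a \<noteq> x b"
proof -
  define I' where "I' = {..<N} - {a}"
  have ins: "{..<N} = insert a I'" and aI: "a \<notin> I'" and bI: "b \<in> I'"
    using a b ab unfolding I'_def by auto
  have fI: "finite I'" unfolding I'_def by simp
  have [measurable]: "a \<in> insert a I'" "b \<in> insert a I'" using bI by auto
  have fm: "(\<lambda>x. ennreal (of_bool (x a - x b = 0))) \<in> borel_measurable (PiM (insert a I') (\<lambda>_. UM))"
    by measurable
  have "(\<integral>\<^sup>+ x. ennreal (of_bool (x a - x b = 0)) \<partial>PiM (insert a I') (\<lambda>_. UM))
      = (\<integral>\<^sup>+ x. \<integral>\<^sup>+ y. ennreal (of_bool ((x(a := y)) a - (x(a := y)) b = 0)) \<partial>UM \<partial>PiM I' (\<lambda>_. UM))"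
    by (rule UMP.product_nn_integral_insert[OF fI aI fm])
  also have "\<dots> = (\<integral>\<^sup>+ x. 0 \<partial>PiM I' (\<lambda>_. UM))"
  proof (intro nn_integral_cong)
    fix x :: "nat \<Rightarrow> real"
    have "(\<integral>\<^sup>+ y. ennreal (of_bool ((x(a := y)) a - (x(a := y)) b = 0)) \<partial>UM) = (\<integral>\<^sup>+ y. indicator {x b} y \<partial>UM)"
      using ab by (intro nn_integral_cong) (auto simp: indicator_def)
    also have "\<dots> = 0" using UM_single by simp
    finally show "(\<integral>\<^sup>+ y. ennreal (of_bool ((x(a := y)) a - (x(a := y)) b = 0)) \<partial>UM) = 0" .
  qed
  finally have "(\<integral>\<^sup>+ x. ennreal (of_bool (x a - x b = 0)) \<partial>PiM (insert a I') (\<lambda>_. UM)) = 0" by simp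
  hence "AE x in PiM (insert a I') (\<lambda>_. UM). ennreal (of_bool (x a - x b = 0)) = 0"
    using nn_integral_0_iff_AE[OF fm] by simp
  thus ?thesis unfolding ins[symmetric] by eventually_elim simp
qed

lemma AE_inj:
  fixes N :: nat shows "AE x in PiM {..<N} (\<lambda>_. UM). inj_on x {..<N}"
proof -
  have "AE x in PiM {..<N} (\<lambda>_. UM). \<forall>ab\<in>{ab \<in> {..<N} \<times> {..<N}. fst ab \<noteq> snd ab}. x (fst ab) \<noteq> x (snd ab)"
  proof (intro eventually_ball_finite)
    show "finite {ab \<in> {..<N} \<times> {..<N}. fst ab \<noteq> snd ab}"
      by (rule finite_subset[of _ "{..<N} \<times> {..<N}"]) auto
  qed (auto intro!: AE_neq)
  thus ?thesis by eventually_elim (auto simp: inj_on_def)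
qed

lemma opt_nonneg: "opt p z \<ge> 0"
  unfolding opt_def cst_def by (intro add_nonneg_nonneg sum_nonneg) auto

lemma gab_nonneg: "gab p N a b x \<ge> 0"
  unfolding gab_def by (intro mult_nonneg_nonneg add_nonneg_nonneg) auto

lemma mcc_meas:
  "(\<lambda>x. min_cycle_cost p N x) \<in> borel_measurable (PiM {..<N} (\<lambda>_. UM))"
proof -
  have e: "min_cycle_cost p N x = Min ((\<lambda>\<sigma>. cycle_cost p N x \<sigma>) ` {\<sigma>. \<sigma> permutes {..<N}})" for x
    unfolding min_cycle_cost_def by (rule arg_cong[where f=Min]) auto
  show ?thesis unfolding e
  proof (rule borel_measurable_Min)
    show "finite {\<sigma>. \<sigma> permutes {..<N}}" by (rule finite_permutations) simp
  next
    fix \<sigma> assume "\<sigma> \<in> {\<sigma>. \<sigma> permutes {..<N}}"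
    hence \<sigma>: "\<sigma> permutes {..<N}" by simp
    show "(\<lambda>x. cycle_cost p N x \<sigma>) \<in> borel_measurable (PiM {..<N} (\<lambda>_. UM))"
      unfolding cycle_cost_def
    proof (rule borel_measurable_sum)
      fix i assume i: "i \<in> {..<N}"
      have [measurable]: "\<sigma> i \<in> {..<N}" "\<sigma> ((i + 1) mod N) \<in> {..<N}"
        using i permutes_in_image[OF \<sigma>] by auto
      show "(\<lambda>x. \<bar>x (\<sigma> i) - x (\<sigma> ((i + 1) mod N))\<bar> powr p) \<in> borel_measurable (PiM {..<N} (\<lambda>_. UM))"
        by measurable
    qed
  qed
qed

lemma expected_value:
  fixes p :: real and N :: nat
  assumes p: "p \<ge> 1" and N: "N \<ge> 3"
  shows "expected_min_cost p N = real N * (real N - 1) *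
     (real (N - 2) * Beta (p+2) (real (N - 2) + 1) + 2 * (Beta (p+2) (real (N - 2) + 1) / (p+1)))"
proof -
  define n where "n = N - 2"
  have n: "n \<ge> 1" using N unfolding n_def by simp
  define K where "K = real n * Beta (p+2) (real n + 1) + 2 * (Beta (p+2) (real n + 1) / (p+1))"
  have K0: "K \<ge> 0" unfolding K_def using Beta_pos[of "p+2" "real n + 1"] p by simp
  let ?P = "PiM {..<N} (\<lambda>_::nat. UM)"
  have mgab: "(\<lambda>x. ennreal (gab p N a b x)) \<in> borel_measurable ?P" if "a \<in> {..<N}" "b \<in> {..<N} - {a}" for a b
    using that by (intro gab_meas) auto
  have gi: "(\<integral>\<^sup>+ x. ennreal (gab p N a b x) \<partial>?P) = ennreal K" if "a \<in> {..<N}" "b \<in> {..<N} - {a}" for a b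
    using that gab_integral_pi2[of a N b p] pi2_to_UM[of a b p n] UM2_to_K[OF p n]
    by (simp add: K_def n_def)
  have "expected_min_cost p N = (\<integral>x. min_cycle_cost p N x \<partial>?P)"
    unfolding expected_min_cost_def unif_points_def ..
  also have "\<dots> = enn2real (\<integral>\<^sup>+ x. ennreal (min_cycle_cost p N x) \<partial>?P)"
    by (rule integral_eq_nn_integral[OF mcc_meas]) (use p N in \<open>auto simp: min_cycle_cost_eq opt_nonneg\<close>)
  also have "(\<integral>\<^sup>+ x. ennreal (min_cycle_cost p N x) \<partial>?P) = (\<integral>\<^sup>+ x. (\<Sum>a<N. \<Sum>b\<in>{..<N}-{a}. ennreal (gab p N a b x)) \<partial>?P)"
  proof (rule nn_integral_cong_AE)
    show "AE x in ?P. ennreal (min_cycle_cost p N x) = (\<Sum>a<N. \<Sum>b\<in>{..<N}-{a}. ennreal (gab p N a b x))"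
      using AE_inj[of N]
    proof eventually_elim
      case (elim x)
      have "min_cycle_cost p N x = (\<Sum>a<N. \<Sum>b\<in>{..<N}-{a}. gab p N a b x)"
        using min_cycle_cost_eq[OF p, of N x] opt_pairs[OF N elim, of p] N by simp
      thus ?case by (simp add: gab_nonneg sum_nonneg)
    qed
  qed
  also have "\<dots> = (\<Sum>a<N. \<Sum>b\<in>{..<N}-{a}. (\<integral>\<^sup>+ x. ennreal (gab p N a b x) \<partial>?P))"
  proof -
    have "(\<integral>\<^sup>+ x. (\<Sum>a<N. \<Sum>b\<in>{..<N}-{a}. ennreal (gab p N a b x)) \<partial>?P)
        = (\<Sum>a<N. \<integral>\<^sup>+ x. (\<Sum>b\<in>{..<N}-{a}. ennreal (gab p N a b x)) \<partial>?P)"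
      by (rule nn_integral_sum) (intro borel_measurable_sum mgab; simp)
    also have "\<dots> = (\<Sum>a<N. \<Sum>b\<in>{..<N}-{a}. (\<integral>\<^sup>+ x. ennreal (gab p N a b x) \<partial>?P))"
      by (intro sum.cong refl nn_integral_sum mgab) auto
    finally show ?thesis .
  qed
  also have "\<dots> = (\<Sum>a<N. \<Sum>b\<in>{..<N}-{a}. ennreal K)"
    by (intro sum.cong refl gi) auto
  also have "\<dots> = ennreal (real N * (real N - 1) * K)"
  proof -
    have rN: "real (N - 1) = real N - 1" using N by (simp add: of_nat_diff)
    have nn: "0 \<le> (real N - 1) * K" using N K0 by simp
    have "(\<Sum>b\<in>{..<N}-{a}. ennreal K) = ennreal ((real N - 1) * K)" if "a < N" for a
    proof -
      have "(\<Sum>b\<in>{..<N}-{a}. ennreal K) = of_nat (N - 1) * ennreal K" using that by simp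
      also have "\<dots> = ennreal (real (N - 1)) * ennreal K" by (simp add: ennreal_of_nat_eq_real_of_nat)
      also have "\<dots> = ennreal (real (N - 1) * K)" using K0 by (simp add: ennreal_mult)
      finally show ?thesis unfolding rN .
    qed
    hence "(\<Sum>a<N. \<Sum>b\<in>{..<N}-{a}. ennreal K) = (\<Sum>a<N. ennreal ((real N - 1) * K))"
      by (intro sum.cong refl) auto
    also have "\<dots> = of_nat N * ennreal ((real N - 1) * K)" by simp
    also have "\<dots> = ennreal (real N * ((real N - 1) * K))"
      using nn by (simp add: ennreal_of_nat_eq_real_of_nat ennreal_mult)
    finally show ?thesis by (simp only: mult.assoc)
  qed
  finally have "expected_min_cost p N = enn2real (ennreal (real N * (real N - 1) * K))" .
  also have "\<dots> = real N * (real N - 1) * K" using K0 N by simp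
  finally show ?thesis unfolding K_def n_def .
qed

lemma ratio_lim:
  fixes p :: real assumes p: "p > 0"
  shows "(\<lambda>N::nat. fact N * real N powr p / Gamma (real N + p + 1)) \<longlonglongrightarrow> 1"
proof -
  have np: "p \<notin> \<int>\<^sub>\<le>\<^sub>0" using p by (auto elim!: nonpos_Ints_cases)
  have gp: "Gamma p > 0" using p by simp
  have L: "Gamma_series p \<longlonglongrightarrow> Gamma p" by (rule Gamma_series_LIMSEQ)
  have ev: "eventually (\<lambda>N. Gamma_series p N / Gamma p = fact N * real N powr p / Gamma (real N + p + 1)) sequentially"
    using eventually_gt_at_top[of "0::nat"]
  proof eventually_elim
    case (elim N)
    have "pochhammer p (N+1) = Gamma (p + real (N+1)) / Gamma p" by (rule pochhammer_Gamma[OF np])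
    moreover have "exp (p * ln (real N)) = real N powr p" using elim by (simp add: powr_def)
    ultimately show ?case using gp unfolding Gamma_series_def
      by (simp add: field_simps add.commute add.left_commute)
  qed
  have "(\<lambda>N. Gamma_series p N / Gamma p) \<longlonglongrightarrow> Gamma p / Gamma p"
    by (intro tendsto_divide L tendsto_const) (use gp in auto)
  hence "(\<lambda>N. Gamma_series p N / Gamma p) \<longlonglongrightarrow> 1" using gp by simp
  thus ?thesis using ev by (rule Lim_transform_eventually)
qed

lemma final_lim:
  fixes p :: real assumes p: "p \<ge> 1"
  shows "(\<lambda>N::nat. real N powr (p - 1) *
     (((real N - 2) * (p + 1) + 2) * (Gamma (real N + 1) * Gamma (p + 1) / Gamma (real N + p + 1)))) \<longlonglongrightarrow> Gamma (p + 2)"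
proof -
  have r: "(\<lambda>N::nat. fact N * real N powr p / Gamma (real N + p + 1)) \<longlonglongrightarrow> 1" by (rule ratio_lim) (use p in auto)
  have q: "(\<lambda>N::nat. (p + 1) - 2 * p / real N) \<longlonglongrightarrow> (p + 1) - 0"
    by (intro tendsto_diff tendsto_const tendsto_divide_0[OF tendsto_const] filterlim_at_top_imp_at_infinity[OF filterlim_real_sequentially])
  have "(\<lambda>N::nat. (fact N * real N powr p / Gamma (real N + p + 1)) * ((p + 1) - 2 * p / real N) * Gamma (p + 1))
      \<longlonglongrightarrow> 1 * ((p + 1) - 0) * Gamma (p + 1)"
    by (intro tendsto_mult r q tendsto_const)
  moreover have "1 * ((p + 1) - 0) * Gamma (p + 1) = Gamma (p + 2)"
  proof -
    have "p + 1 \<notin> \<int>\<^sub>\<le>\<^sub>0" using p by (auto elim!: nonpos_Ints_cases)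
    from Gamma_plus1[OF this] show ?thesis by (simp add: add.assoc)
  qed
  moreover have "eventually (\<lambda>N::nat. (fact N * real N powr p / Gamma (real N + p + 1)) * ((p + 1) - 2 * p / real N) * Gamma (p + 1)
      = real N powr (p - 1) * (((real N - 2) * (p + 1) + 2) * (Gamma (real N + 1) * Gamma (p + 1) / Gamma (real N + p + 1)))) sequentially"
    using eventually_gt_at_top[of "0::nat"]
  proof eventually_elim
    case (elim N)
    have g: "Gamma (real N + 1) = fact N" using Gamma_fact[of N, where 'a=real] by (simp add: add.commute)
    have pw: "real N powr p = real N powr (p - 1) * real N" using elim by (simp add: powr_diff)
    have "(p + 1) - 2 * p / real N = ((real N - 2) * (p + 1) + 2) / real N" using elim by (simp add: field_simps)
    moreover have "Gamma (real N + p + 1) > 0" using p by (intro Gamma_real_pos) simp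
    ultimately show ?case unfolding g pw using elim by (simp add: field_simps)
  qed
  ultimately show ?thesis by (simp add: Lim_transform_eventually)
qed

lemma alg_aux:
  fixes m n p G F D :: real assumes "p \<ge> 1" "D > 0" "m = n + 2"
  shows "m * (m - 1) * (n * ((p + 1) * G * F / D) + 2 * ((p + 1) * G * F / D / (p + 1)))
       = ((m - 2) * (p + 1) + 2) * ((n + 2) * (n + 1) * F * G / D)"
proof -
  have "(p + 1) * G * F / D / (p + 1) = G * F / D" using assms by simp
  thus ?thesis using assms by (simp add: algebra_simps add_divide_distrib diff_divide_distrib)
qed

lemma gamma_alg:
  fixes p :: real and N :: nat assumes p: "p \<ge> 1" and N: "N \<ge> 3"
  shows "real N * (real N - 1) * (real (N - 2) * Beta (p+2) (real (N - 2) + 1) + 2 * (Beta (p+2) (real (N - 2) + 1) / (p+1)))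
    = ((real N - 2) * (p + 1) + 2) * (Gamma (real N + 1) * Gamma (p + 1) / Gamma (real N + p + 1))"
proof -
  define n where "n = N - 2"
  have Nn: "N = n + 2" using N unfolding n_def by simp
  have g1: "Gamma (real n + 1) = fact n" using Gamma_fact[of n, where 'a=real] by (simp add: add.commute)
  have g2: "Gamma (real N + 1) = (real n + 2) * (real n + 1) * fact n"
  proof -
    have "Gamma (real N + 1) = fact N" using Gamma_fact[of N, where 'a=real] by (simp add: add.commute)
    also have "\<dots> = (real n + 2) * (real n + 1) * fact n" unfolding Nn
      by (simp add: fact_Suc algebra_simps numeral_2_eq_2)
    finally show ?thesis .
  qed
  have g3: "Gamma (p + 2) = (p + 1) * Gamma (p + 1)"
  proof -
    have "p + 1 \<notin> \<int>\<^sub>\<le>\<^sub>0" using p by (auto elim!: nonpos_Ints_cases)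
    from Gamma_plus1[OF this] show ?thesis by (simp add: add.assoc)
  qed
  have g4: "p + 2 + (real n + 1) = real N + p + 1" unfolding Nn by simp
  have gp: "Gamma (real N + p + 1) > 0" using p by (intro Gamma_real_pos) simp
  have rn: "real (N - 2) = real n" unfolding Nn by simp
  have rN: "real N = real n + 2" unfolding Nn by simp
  show ?thesis
    unfolding Beta_def g1 g2 g3 g4 rn using alg_aux[OF p gp rN, of "Gamma (p+1)" "fact n"]
    by (simp only: mult.assoc)
qed

theorem mainTheorem11:
  fixes p :: real
  assumes "p \<ge> 1"
  shows "(\<forall>N::nat. N \<ge> 3 \<longrightarrow>
            expected_min_cost p N =
              ((real N - 2) * (p + 1) + 2) * (Gamma (real N + 1) * Gamma (p + 1) / Gamma (real N + p + 1)))
       \<and> (\<lambda>N::nat. real N powr (p - 1) * expected_min_cost p N) \<longlonglongrightarrow> Gamma (p + 2)"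
proof -
  have E: "expected_min_cost p N =
              ((real N - 2) * (p + 1) + 2) * (Gamma (real N + 1) * Gamma (p + 1) / Gamma (real N + p + 1))"
    if "N \<ge> 3" for N :: nat
    using expected_value[OF assms that] gamma_alg[OF assms that] by simp
  have ev: "eventually (\<lambda>N::nat. real N powr (p - 1) *
     (((real N - 2) * (p + 1) + 2) * (Gamma (real N + 1) * Gamma (p + 1) / Gamma (real N + p + 1)))
     = real N powr (p - 1) * expected_min_cost p N) sequentially"
    using eventually_ge_at_top[of "3::nat"] by eventually_elim (simp add: E)
  have "(\<lambda>N::nat. real N powr (p - 1) * expected_min_cost p N) \<longlonglongrightarrow> Gamma (p + 2)"
    using final_lim[OF assms] ev by (rule Lim_transform_eventually)
  thus ?thesis using E by blast
qed

end
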